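(* Let $f$ be a homeomorphism of a compact manifold $X$ of dimension at least $2$ (with a metric $d$ compatible with its topology) and let $x\in X$ be a minimally expansive point of $f$. Then $x$ is a shadowable point of $f$ if and only if $x$ is a topologically stable point of $f$.
   Context: $f$ is expansive on $A\subset X$ with constant $\mathfrak{c}$ if for all distinct $a,b\in A$ there is $n\in\mathbb{Z}$ with $d(f^n(a),f^n(b))>\mathfrak{c}$. $x$ is minimally expansive for $f$ if there is $\mathfrak{c}>0$ such that for each $y$ with $d(x,y)<\mathfrak{c}$, $f$ is expansive on $\overline{\mathcal{O}_f(y)}$ with constant $\mathfrak{c}$, where $\mathcal{O}_f(y)=\{f^n(y):n\in\mathbb{Z}\}$. A $\delta$-pseudo orbit for $f$ through $x$ is $\{x_n\}_{n\in\mathbb{Z}}$ with $x_0=x$, $d(f(x_n),x_{n+1})<\delta$ for all $n$; $x$ is shadowable if for every $\epsilon>0$ there is $\delta>0$ such that every $\delta$-pseudo orbit through $x$ admits $y\in X$ with $d(f^n(y),x_n)<\epsilon$ for all $n\in\mathbb{Z}$. $x$ is a topologically stable point of $f$ if for every $\epsilon>0$ there is $\delta>0$ such that for every homeomorphism $g$ of $X$ with $\sup_{z}d(f(z),g(z))\le\delta$ there is a continuous $h:\overline{\mathcal{O}_g(x)}\to X$ with $f\circ h=h\circ g$ and $d(h(z),z)\le\epsilon$ for all $z\in\overline{\mathcal{O}_g(x)}$. *)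

theory Defs
  imports "HOL-Analysis.Analysis"
begin

definition iterz :: "'a set \<Rightarrow> ('a \<Rightarrow> 'a) \<Rightarrow> int \<Rightarrow> 'a \<Rightarrow> 'a" where
  "iterz X f n = (if 0 \<le> n then f ^^ nat n else inv_into X f ^^ nat (- n))"

definition orbit :: "'a set \<Rightarrow> ('a \<Rightarrow> 'a) \<Rightarrow> 'a \<Rightarrow> 'a set" where
  "orbit X f y = {iterz X f n y | n. True}"

definition is_homeo :: "'a::topological_space set \<Rightarrow> ('a \<Rightarrow> 'a) \<Rightarrow> bool" where
  "is_homeo X f \<longleftrightarrow> (\<exists>g. homeomorphism X X f g)"

text \<open>Topological manifold of dimension DIM('b) (locally Euclidean; Hausdorff and
  second countability are automatic for a compact metric space).\<close>
definition is_manifold_dim :: "'a::metric_space set \<Rightarrow> 'b::euclidean_space itself \<Rightarrow> bool" where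
  "is_manifold_dim X _ \<longleftrightarrow>
     (\<forall>x\<in>X. \<exists>U (V::'b set). openin (top_of_set X) U \<and> x \<in> U \<and> open V \<and> V homeomorphic U)"

definition expansive_on :: "'a::metric_space set \<Rightarrow> ('a \<Rightarrow> 'a) \<Rightarrow> 'a set \<Rightarrow> real \<Rightarrow> bool" where
  "expansive_on X f A c \<longleftrightarrow>
     (\<forall>a\<in>A. \<forall>b\<in>A. a \<noteq> b \<longrightarrow> (\<exists>n::int. dist (iterz X f n a) (iterz X f n b) > c))"

definition minimally_expansive :: "'a::metric_space set \<Rightarrow> ('a \<Rightarrow> 'a) \<Rightarrow> 'a \<Rightarrow> bool" where
  "minimally_expansive X f x \<longleftrightarrow>
     (\<exists>c>0. \<forall>y\<in>X. dist x y < c \<longrightarrow> expansive_on X f (closure (orbit X f y)) c)"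

definition pseudo_orbit_through ::
    "'a::metric_space set \<Rightarrow> ('a \<Rightarrow> 'a) \<Rightarrow> real \<Rightarrow> 'a \<Rightarrow> (int \<Rightarrow> 'a) \<Rightarrow> bool" where
  "pseudo_orbit_through X f \<delta> x xs \<longleftrightarrow>
     (\<forall>n. xs n \<in> X) \<and> xs 0 = x \<and> (\<forall>n. dist (f (xs n)) (xs (n + 1)) < \<delta>)"

definition shadowable_point :: "'a::metric_space set \<Rightarrow> ('a \<Rightarrow> 'a) \<Rightarrow> 'a \<Rightarrow> bool" where
  "shadowable_point X f x \<longleftrightarrow>
     (\<forall>\<epsilon>>0. \<exists>\<delta>>0. \<forall>xs. pseudo_orbit_through X f \<delta> x xs \<longrightarrow>
        (\<exists>y\<in>X. \<forall>n. dist (iterz X f n y) (xs n) < \<epsilon>))"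

definition topologically_stable_point :: "'a::metric_space set \<Rightarrow> ('a \<Rightarrow> 'a) \<Rightarrow> 'a \<Rightarrow> bool" where
  "topologically_stable_point X f x \<longleftrightarrow>
     (\<forall>\<epsilon>>0. \<exists>\<delta>>0. \<forall>g. is_homeo X g \<and> (\<forall>z\<in>X. dist (f z) (g z) \<le> \<delta>) \<longrightarrow>
        (\<exists>h. continuous_on (closure (orbit X g x)) h \<and> h ` closure (orbit X g x) \<subseteq> X \<and>
             (\<forall>z\<in>closure (orbit X g x). f (h z) = h (g z)) \<and>
             (\<forall>z\<in>closure (orbit X g x). dist (h z) z \<le> \<epsilon>)))"

end

theory Submission
  imports Defs "HOL-Analysis.Analysis"
begin

lemma inv_into_homeo:
  assumes "homeomorphism X X f f'" "z \<in> X"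
  shows "inv_into X f z = f' z"
proof -
  have inj: "inj_on f X" using assms(1) by (metis homeomorphism_apply1 inj_on_inverseI)
  have "f' z \<in> X" "f (f' z) = z" using assms by (auto simp: homeomorphism_def)
  then show ?thesis using inv_into_f_f[OF inj] by metis
qed

lemma funpow_in: "(\<And>z. z \<in> X \<Longrightarrow> f z \<in> X) \<Longrightarrow> z \<in> X \<Longrightarrow> (f ^^ n) z \<in> X"
  by (induction n) auto

lemma funpow_cont:
  assumes "continuous_on X f" "f ` X \<subseteq> X"
  shows "continuous_on X (f ^^ n)"
proof (induction n)
  case 0 then show ?case by (simp add: continuous_on_id)
next
  case (Suc n)
  have "(f ^^ n) ` X \<subseteq> X" using funpow_in[of X f] assms(2) by blast
  then have "continuous_on X (f \<circ> (f ^^ n))"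
    using Suc assms by (metis continuous_on_compose continuous_on_subset)
  then show ?case by simp
qed

lemma funpow_inv_into:
  assumes "homeomorphism X X f f'" "z \<in> X"
  shows "(inv_into X f ^^ k) z = (f' ^^ k) z \<and> (f' ^^ k) z \<in> X"
proof (induction k)
  case 0 then show ?case using assms by simp
next
  case (Suc k)
  have "f' ` X \<subseteq> X" using assms(1) by (simp add: homeomorphism_def)
  then show ?case using Suc inv_into_homeo[OF assms(1)] by auto
qed

lemma iterz_alt:
  assumes "homeomorphism X X f f'" "z \<in> X"
  shows "iterz X f n z = (if 0 \<le> n then (f ^^ nat n) z else (f' ^^ nat (- n)) z)"
  using funpow_inv_into[OF assms] by (simp add: iterz_def)

lemma iterz_in:
  assumes "homeomorphism X X f f'" "z \<in> X"
  shows "iterz X f n z \<in> X"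
proof -
  have "f ` X \<subseteq> X" "f' ` X \<subseteq> X" using assms(1) by (auto simp: homeomorphism_def)
  then show ?thesis using iterz_alt[OF assms] funpow_in[of X f] funpow_in[of X f'] assms(2)
    by (auto simp: image_subset_iff)
qed

lemma iterz_0 [simp]: "iterz X f 0 z = z"
  by (simp add: iterz_def)

lemma iterz_succ:
  assumes "homeomorphism X X f f'" "z \<in> X"
  shows "iterz X f (n + 1) z = f (iterz X f n z)"
proof -
  have fX: "f' ` X \<subseteq> X" using assms(1) by (auto simp: homeomorphism_def)
  have ff: "\<And>w. w \<in> X \<Longrightarrow> f (f' w) = w" using assms(1) by (simp add: homeomorphism_apply2)
  consider "0 \<le> n" | "n = -1" | "n \<le> -2" by linarith
  then show ?thesis
  proof cases
    case 1
    then have "nat (n+1) = Suc (nat n)" by simp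
    then show ?thesis using 1 iterz_alt[OF assms] by simp
  next
    case 2
    then show ?thesis using iterz_alt[OF assms] ff[OF assms(2)] by simp
  next
    case 3
    then have e: "nat (- n) = Suc (nat (- (n + 1)))" by simp
    have w: "(f' ^^ nat (- (n + 1))) z \<in> X" using funpow_in[of X f'] fX assms(2) by blast
    show ?thesis using 3 iterz_alt[OF assms, of n] iterz_alt[OF assms, of "n+1"] e ff[OF w] by simp
  qed
qed

lemma iterz_pred:
  assumes "homeomorphism X X f f'" "z \<in> X"
  shows "iterz X f (n - 1) z = f' (iterz X f n z)"
proof -
  have "iterz X f n z = f (iterz X f (n - 1) z)" using iterz_succ[OF assms, of "n - 1"] by simp
  moreover have "iterz X f (n - 1) z \<in> X" by (rule iterz_in[OF assms])
  ultimately show ?thesis using assms(1) by (simp add: homeomorphism_apply1)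
qed

lemma iterz_add:
  assumes "homeomorphism X X f f'" "z \<in> X"
  shows "iterz X f (m + n) z = iterz X f m (iterz X f n z)"
proof (induction m rule: int_induct[where k = 0])
  case base then show ?case by simp
next
  case (step1 i)
  have "iterz X f (i + 1 + n) z = iterz X f ((i + n) + 1) z" by (simp add: ac_simps)
  also have "\<dots> = f (iterz X f (i + n) z)" by (rule iterz_succ[OF assms])
  also have "\<dots> = f (iterz X f i (iterz X f n z))" using step1 by simp
  also have "\<dots> = iterz X f (i + 1) (iterz X f n z)"
    using iterz_succ[OF assms(1) iterz_in[OF assms]] by simp
  finally show ?case .
next
  case (step2 i)
  have e: "i - 1 + n = (i + n) - 1" by simp
  have "iterz X f (i - 1 + n) z = iterz X f ((i + n) - 1) z" by (simp only: e)
  also have "\<dots> = f' (iterz X f (i + n) z)" by (rule iterz_pred[OF assms])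
  also have "\<dots> = f' (iterz X f i (iterz X f n z))" using step2 by simp
  also have "\<dots> = iterz X f (i - 1) (iterz X f n z)"
    using iterz_pred[OF assms(1) iterz_in[OF assms]] by simp
  finally show ?case .
qed

lemma iterz_cont:
  assumes "homeomorphism X X f f'"
  shows "continuous_on X (iterz X f n)"
proof -
  have h: "continuous_on X f" "f ` X \<subseteq> X" "continuous_on X f'" "f' ` X \<subseteq> X"
    using assms by (auto simp: homeomorphism_def)
  show ?thesis
  proof (cases "0 \<le> n")
    case True
    show ?thesis
      by (rule continuous_on_eq[OF funpow_cont[OF h(1,2), of "nat n"]]) (use iterz_alt[OF assms] True in simp)
  next
    case False
    show ?thesis
      by (rule continuous_on_eq[OF funpow_cont[OF h(3,4), of "nat (- n)"]]) (use iterz_alt[OF assms] False in simp)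
  qed
qed

lemma iterz_1:
  assumes "homeomorphism X X f f'" "z \<in> X"
  shows "iterz X f 1 z = f z"
  using iterz_succ[OF assms, of 0] by simp

lemma dist_limit_le:
  fixes a b :: "nat \<Rightarrow> 'a::metric_space"
  assumes "a \<longlonglongrightarrow> la" "b \<longlonglongrightarrow> lb" "\<And>k. dist (a k) (b k) \<le> e"
  shows "dist la lb \<le> e"
proof -
  have "(\<lambda>k. dist (a k) (b k)) \<longlonglongrightarrow> dist la lb" using assms by (intro tendsto_dist)
  then show ?thesis using assms(3) by (intro LIMSEQ_le_const2) auto
qed

lemma orbit_sub:
  assumes "homeomorphism X X f f'" "y \<in> X"
  shows "orbit X f y \<subseteq> X"
  using iterz_in[OF assms] by (auto simp: orbit_def)

lemma closure_orbit_sub: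
  assumes "homeomorphism X X f f'" "y \<in> X" "closed X"
  shows "closure (orbit X f y) \<subseteq> X"
  using orbit_sub[OF assms(1,2)] assms(3) by (simp add: closure_minimal)

lemma closure_orbit_inv:
  assumes "homeomorphism X X f f'" "y \<in> X" "closed X" "w \<in> closure (orbit X f y)"
  shows "iterz X f n w \<in> closure (orbit X f y)"
proof -
  have "iterz X f n ` closure (orbit X f y) \<subseteq> closure (orbit X f y)"
  proof (rule image_closure_subset)
    show "continuous_on (closure (orbit X f y)) (iterz X f n)"
      using iterz_cont[OF assms(1)] closure_orbit_sub[OF assms(1-3)] continuous_on_subset by blast
    show "iterz X f n ` orbit X f y \<subseteq> closure (orbit X f y)"
    proof
      fix u assume "u \<in> iterz X f n ` orbit X f y"
      then obtain m where "u = iterz X f n (iterz X f m y)" by (auto simp: orbit_def)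
      then have "u = iterz X f (n + m) y" using iterz_add[OF assms(1,2)] by simp
      then show "u \<in> closure (orbit X f y)" by (auto simp: orbit_def intro: closure_subset[THEN subsetD])
    qed
  qed simp
  then show ?thesis using assms(4) by blast
qed

lemma orbit_in_closure:
  "iterz X f n y \<in> closure (orbit X f y)"
  by (auto simp: orbit_def intro: closure_subset[THEN subsetD])

lemma shadow_imp_ts:
  fixes X :: "'a::metric_space set"
  assumes cX: "compact X" and hf: "homeomorphism X X f f'" and xX: "x \<in> X"
    and me: "minimally_expansive X f x" and sh: "shadowable_point X f x"
  shows "topologically_stable_point X f x"
  unfolding topologically_stable_point_def
proof (intro allI impI)
  fix \<epsilon> :: real assume "\<epsilon> > 0"
  obtain c where c0: "c > 0" and cexp: "\<And>y. y \<in> X \<Longrightarrow> dist x y < c \<Longrightarrow> expansive_on X f (closure (orbit X f y)) c"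
    using me unfolding minimally_expansive_def by blast
  define e1 where "e1 = min \<epsilon> (c / 3)"
  have e1: "e1 > 0" "e1 \<le> \<epsilon>" "e1 \<le> c / 3" using \<open>\<epsilon> > 0\<close> c0 by (auto simp: e1_def)
  obtain \<delta>1 where d1: "\<delta>1 > 0" and shd: "\<And>xs. pseudo_orbit_through X f \<delta>1 x xs \<Longrightarrow> \<exists>y\<in>X. \<forall>n. dist (iterz X f n y) (xs n) < e1"
    using sh e1(1) unfolding shadowable_point_def by blast
  show "\<exists>\<delta>>0. \<forall>g. is_homeo X g \<and> (\<forall>z\<in>X. dist (f z) (g z) \<le> \<delta>) \<longrightarrow>
        (\<exists>h. continuous_on (closure (orbit X g x)) h \<and> h ` closure (orbit X g x) \<subseteq> X \<and>
             (\<forall>z\<in>closure (orbit X g x). f (h z) = h (g z)) \<and>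
             (\<forall>z\<in>closure (orbit X g x). dist (h z) z \<le> \<epsilon>))"
  proof (intro exI[of _ "\<delta>1 / 2"] conjI allI impI)
    show "\<delta>1 / 2 > 0" using d1 by simp
    fix g assume gass: "is_homeo X g \<and> (\<forall>z\<in>X. dist (f z) (g z) \<le> \<delta>1 / 2)"
    then obtain g' where hg: "homeomorphism X X g g'" unfolding is_homeo_def by blast
    have close: "\<And>z. z \<in> X \<Longrightarrow> dist (f z) (g z) \<le> \<delta>1 / 2" using gass by blast
    have clX: "closed X" using cX by (rule compact_imp_closed)
    have "pseudo_orbit_through X f \<delta>1 x (\<lambda>n. iterz X g n x)"
      unfolding pseudo_orbit_through_def
    proof (intro conjI allI)
      fix n
      show "iterz X g n x \<in> X" by (rule iterz_in[OF hg xX])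
      have "dist (f (iterz X g n x)) (iterz X g (n + 1) x) = dist (f (iterz X g n x)) (g (iterz X g n x))"
        using iterz_succ[OF hg xX] by simp
      also have "\<dots> \<le> \<delta>1 / 2" using close iterz_in[OF hg xX] by blast
      finally show "dist (f (iterz X g n x)) (iterz X g (n + 1) x) < \<delta>1" using d1 by simp
    qed simp
    then obtain y where yX: "y \<in> X" and ysh: "\<And>n. dist (iterz X f n y) (iterz X g n x) < e1"
      using shd by blast
    have "dist x y < c" using ysh[of 0] e1 c0 by (simp add: dist_commute)
    then have exp: "expansive_on X f (closure (orbit X f y)) c" using cexp yX by blast
    define C where "C = closure (orbit X g x)"
    define D where "D = closure (orbit X f y)"
    have CX: "C \<subseteq> X" unfolding C_def by (rule closure_orbit_sub[OF hg xX clX])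
    have DX: "D \<subseteq> X" unfolding D_def by (rule closure_orbit_sub[OF hf yX clX])
    have cC: "compact C" using CX cX unfolding C_def by (metis closed_closure compact_Int_closed inf.absorb_iff2)
    have cD: "compact D" using DX cX unfolding D_def by (metis closed_closure compact_Int_closed inf.absorb_iff2)
    define R where "R z w \<longleftrightarrow> w \<in> D \<and> (\<forall>n. dist (iterz X f n w) (iterz X g n z) \<le> e1)" for z w
    have Rex: "\<exists>w. R z w" if zC: "z \<in> C" for z
    proof -
      obtain s where s: "\<And>k. s k \<in> orbit X g x" "s \<longlonglongrightarrow> z"
        using zC unfolding C_def closure_sequential by blast
      have "\<forall>k. \<exists>m. s k = iterz X g m x" using s(1) by (auto simp: orbit_def)
      then obtain m where m: "\<And>k. s k = iterz X g (m k) x" by metis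
      have tD: "\<forall>k. iterz X f (m k) y \<in> D" unfolding D_def by (simp add: orbit_in_closure)
      obtain w r where w: "w \<in> D" "strict_mono r" "((\<lambda>k. iterz X f (m k) y) \<circ> r) \<longlonglongrightarrow> w"
        by (rule seq_compactE[OF compact_imp_seq_compact[OF cD] tD])
      have "dist (iterz X f n w) (iterz X g n z) \<le> e1" for n
      proof (rule dist_limit_le)
        show "(\<lambda>k. iterz X f n (iterz X f (m (r k)) y)) \<longlonglongrightarrow> iterz X f n w"
          using w DX by (intro continuous_on_tendsto_compose[OF iterz_cont[OF hf]])
             (auto simp: o_def iterz_in[OF hf yX])
        have "(s \<circ> r) \<longlonglongrightarrow> z" using s(2) w(2) by (rule LIMSEQ_subseq_LIMSEQ)
        then show "(\<lambda>k. iterz X g n (s (r k))) \<longlonglongrightarrow> iterz X g n z"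
          using zC CX by (intro continuous_on_tendsto_compose[OF iterz_cont[OF hg]])
             (auto simp: o_def m iterz_in[OF hg xX])
        fix k
        have "iterz X f n (iterz X f (m (r k)) y) = iterz X f (n + m (r k)) y"
          using iterz_add[OF hf yX] by simp
        moreover have "iterz X g n (s (r k)) = iterz X g (n + m (r k)) x"
          using iterz_add[OF hg xX] m by simp
        ultimately show "dist (iterz X f n (iterz X f (m (r k)) y)) (iterz X g n (s (r k))) \<le> e1"
          using ysh[of "n + m (r k)"] by simp
      qed
      then show ?thesis using w(1) unfolding R_def by blast
    qed
    have Runi: "w = w'" if Rzw: "R z w" "R z w'" for z w w'
    proof (rule ccontr)
      assume "w \<noteq> w'"
      then obtain n where n: "dist (iterz X f n w) (iterz X f n w') > c"
        using exp Rzw unfolding expansive_on_def R_def D_def by blast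
      have "dist (iterz X f n w) (iterz X f n w') \<le> dist (iterz X f n w) (iterz X g n z) + dist (iterz X f n w') (iterz X g n z)"
        by (rule dist_triangle2)
      also have "\<dots> \<le> 2 * e1" using Rzw unfolding R_def by (smt (verit))
      finally show False using n e1 by simp
    qed
    define h where "h z = (SOME w. R z w)" for z
    have hR: "R z (h z)" if "z \<in> C" for z
      unfolding h_def using Rex[OF that] by (rule someI_ex)
    have hD: "h z \<in> D" if "z \<in> C" for z using hR[OF that] unfolding R_def by blast
    have gC: "g z \<in> C" if "z \<in> C" for z
      using closure_orbit_inv[OF hg xX clX, of z 1] that iterz_1[OF hg] CX unfolding C_def by auto
    show "\<exists>h. continuous_on C h \<and> h ` C \<subseteq> X \<and> (\<forall>z\<in>C. f (h z) = h (g z)) \<and> (\<forall>z\<in>C. dist (h z) z \<le> \<epsilon>)"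
      unfolding C_def[symmetric]
    proof (intro exI[of _ h] conjI ballI)
      show "h ` C \<subseteq> X" using hD DX by blast
    next
      fix z assume zC: "z \<in> C"
      show "dist (h z) z \<le> \<epsilon>" using hR[OF zC] e1 unfolding R_def by (metis iterz_0 order_trans)
    next
      fix z assume zC: "z \<in> C"
      have hzX: "h z \<in> X" using hD[OF zC] DX by blast
      have zX: "z \<in> X" using zC CX by blast
      have "R (g z) (f (h z))"
        unfolding R_def
      proof (intro conjI allI)
        show "f (h z) \<in> D"
          using closure_orbit_inv[OF hf yX clX hD[OF zC, unfolded D_def], of 1] iterz_1[OF hf hzX] unfolding D_def by simp
        fix n
        have "iterz X f n (f (h z)) = iterz X f (n + 1) (h z)"
          using iterz_add[OF hf hzX, of n 1] iterz_1[OF hf hzX] by simp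
        moreover have "iterz X g n (g z) = iterz X g (n + 1) z"
          using iterz_add[OF hg zX, of n 1] iterz_1[OF hg zX] by simp
        ultimately show "dist (iterz X f n (f (h z))) (iterz X g n (g z)) \<le> e1"
          using hR[OF zC] unfolding R_def by simp
      qed
      then show "f (h z) = h (g z)" using hR[OF gC[OF zC]] Runi by blast
    next
      define G where "G = (C \<times> D) \<inter> (\<Inter>n. (C \<times> D) \<inter> (\<lambda>p. dist (iterz X f n (snd p)) (iterz X g n (fst p))) -` {..e1})"
      have CDc: "closed (C \<times> D)" using cC cD by (simp add: compact_imp_closed closed_Times)
      have Gn: "closed ((C \<times> D) \<inter> (\<lambda>p. dist (iterz X f n (snd p)) (iterz X g n (fst p))) -` {..e1})" for n
      proof (rule continuous_closed_preimage)
        have c1: "continuous_on (C \<times> D) (\<lambda>p. iterz X f n (snd p))"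
          by (rule continuous_on_compose2[OF iterz_cont[OF hf] continuous_on_snd]) (use DX in auto)
        have c2: "continuous_on (C \<times> D) (\<lambda>p. iterz X g n (fst p))"
          by (rule continuous_on_compose2[OF iterz_cont[OF hg] continuous_on_fst]) (use CX in auto)
        show "continuous_on (C \<times> D) (\<lambda>p. dist (iterz X f n (snd p)) (iterz X g n (fst p)))"
          using c1 c2 by (intro continuous_on_dist)
      qed (use CDc in simp_all)
      have Gcl: "closed G"
        unfolding G_def using CDc Gn by (intro closed_Int closed_INT) auto
      have Gc: "compact G"
      proof -
        have "G \<subseteq> C \<times> D" unfolding G_def by blast
        then have "G = (C \<times> D) \<inter> G" by blast
        then show ?thesis using compact_Int_closed[OF compact_Times[OF cC cD] Gcl] by simp
      qed
      have GR: "p \<in> G \<longleftrightarrow> fst p \<in> C \<and> R (fst p) (snd p)" for p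
        unfolding G_def R_def by (cases p) auto
      show "continuous_on C h"
        unfolding continuous_on_closed_invariant
      proof (intro allI impI)
        fix B :: "'a set" assume Bc: "closed B"
        define A where "A = fst ` (G \<inter> (UNIV \<times> B))"
        have "compact A" unfolding A_def
          using Gc Bc by (intro compact_continuous_image continuous_on_fst compact_Int_closed) (auto intro: closed_Times)
        moreover have "A \<inter> C = h -` B \<inter> C"
        proof (intro equalityI subsetI)
          fix z assume zz: "z \<in> A \<inter> C"
          then obtain w where "(z, w) \<in> G" "w \<in> B" unfolding A_def by auto
          then show "z \<in> h -` B \<inter> C" using GR Runi hR zz by fastforce
        next
          fix z assume zz: "z \<in> h -` B \<inter> C"
          then have "(z, h z) \<in> G \<inter> (UNIV \<times> B)" using GR hR by auto
          then show "z \<in> A \<inter> C" using zz unfolding A_def by force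
        qed
        ultimately show "\<exists>A. closed A \<and> A \<inter> C = h -` B \<inter> C" using compact_imp_closed by blast
      qed
    qed
  qed
qed

lemma inner_sum_Basis_scaleR:
  fixes f :: "'b::euclidean_space \<Rightarrow> real"
  assumes "j \<in> Basis"
  shows "(\<Sum>k\<in>Basis. f k *\<^sub>R k) \<bullet> j = f j"
proof -
  have "(\<Sum>k\<in>Basis. f k *\<^sub>R k) \<bullet> j = (\<Sum>k\<in>Basis. f k * (k \<bullet> j))"
    by (simp add: inner_sum_left)
  also have "\<dots> = (\<Sum>k\<in>Basis. if k = j then f j else 0)"
    using assms by (intro sum.cong) (auto simp: inner_Basis)
  also have "\<dots> = f j" using assms by simp
  finally show ?thesis .
qed

definition lo_of :: "real \<Rightarrow> ('b::euclidean_space \<Rightarrow> int) \<Rightarrow> 'b" where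
  "lo_of s k = (\<Sum>j\<in>Basis. ((real_of_int (k j) - 1/4) * s) *\<^sub>R j)"
definition hi_of :: "real \<Rightarrow> ('b::euclidean_space \<Rightarrow> int) \<Rightarrow> 'b" where
  "hi_of s k = (\<Sum>j\<in>Basis. ((real_of_int (k j) + 5/4) * s) *\<^sub>R j)"
definition cell_of :: "real \<Rightarrow> 'b::euclidean_space \<Rightarrow> 'b \<Rightarrow> int" where
  "cell_of s u = (\<lambda>j. \<lfloor>(u \<bullet> j) / s\<rfloor>)"

lemma lo_hi_inner:
  "j \<in> Basis \<Longrightarrow> lo_of s k \<bullet> j = (real_of_int (k j) - 1/4) * s"
  "j \<in> Basis \<Longrightarrow> hi_of s k \<bullet> j = (real_of_int (k j) + 5/4) * s"
  unfolding lo_of_def hi_of_def by (simp_all add: inner_sum_Basis_scaleR)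

lemma mem_cellbox:
  "v \<in> box (lo_of s k) (hi_of s k) \<longleftrightarrow>
     (\<forall>j\<in>Basis. (real_of_int (k j) - 1/4) * s < v \<bullet> j \<and> v \<bullet> j < (real_of_int (k j) + 5/4) * s)"
  "v \<in> cbox (lo_of s k) (hi_of s k) \<longleftrightarrow>
     (\<forall>j\<in>Basis. (real_of_int (k j) - 1/4) * s \<le> v \<bullet> j \<and> v \<bullet> j \<le> (real_of_int (k j) + 5/4) * s)"
  by (simp_all add: mem_box lo_hi_inner)

lemma cell_in_box:
  fixes u w :: "'b::euclidean_space"
  assumes s: "s > 0" and d: "dist u w < s / 4"
  shows "u \<in> box (lo_of s (cell_of s u)) (hi_of s (cell_of s u))"
    "w \<in> box (lo_of s (cell_of s u)) (hi_of s (cell_of s u))"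
proof -
  have fl: "real_of_int \<lfloor>(u \<bullet> j) / s\<rfloor> * s \<le> u \<bullet> j" "u \<bullet> j < (real_of_int \<lfloor>(u \<bullet> j) / s\<rfloor> + 1) * s" for j
  proof -
    have "real_of_int \<lfloor>(u \<bullet> j) / s\<rfloor> \<le> (u \<bullet> j) / s" by (rule of_int_floor_le)
    then have "real_of_int \<lfloor>(u \<bullet> j) / s\<rfloor> * s \<le> ((u \<bullet> j) / s) * s" using s by (intro mult_right_mono) auto
    then show "real_of_int \<lfloor>(u \<bullet> j) / s\<rfloor> * s \<le> u \<bullet> j" using s by simp
    have "(u \<bullet> j) / s < real_of_int \<lfloor>(u \<bullet> j) / s\<rfloor> + 1" by (rule real_of_int_floor_add_one_gt)
    then have "((u \<bullet> j) / s) * s < (real_of_int \<lfloor>(u \<bullet> j) / s\<rfloor> + 1) * s" using s by (intro mult_strict_right_mono) auto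
    then show "u \<bullet> j < (real_of_int \<lfloor>(u \<bullet> j) / s\<rfloor> + 1) * s" using s by simp
  qed
  have wj: "\<bar>w \<bullet> j - u \<bullet> j\<bar> < s / 4" if "j \<in> Basis" for j
  proof -
    have "\<bar>(w - u) \<bullet> j\<bar> \<le> norm (w - u)" by (rule Basis_le_norm[OF that])
    also have "\<dots> < s / 4" using d by (simp add: dist_norm norm_minus_commute)
    finally show ?thesis by (simp add: inner_diff_left)
  qed
  show "u \<in> box (lo_of s (cell_of s u)) (hi_of s (cell_of s u))"
    unfolding mem_cellbox cell_of_def
  proof
    fix j :: 'b assume j: "j \<in> Basis"
    show "(real_of_int \<lfloor>u \<bullet> j / s\<rfloor> - 1 / 4) * s < u \<bullet> j \<and> u \<bullet> j < (real_of_int \<lfloor>u \<bullet> j / s\<rfloor> + 5 / 4) * s"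
      using fl[of j] s by (auto simp: algebra_simps)
  qed
  show "w \<in> box (lo_of s (cell_of s u)) (hi_of s (cell_of s u))"
    unfolding mem_cellbox cell_of_def
  proof
    fix j :: 'b assume j: "j \<in> Basis"
    show "(real_of_int \<lfloor>u \<bullet> j / s\<rfloor> - 1 / 4) * s < w \<bullet> j \<and> w \<bullet> j < (real_of_int \<lfloor>u \<bullet> j / s\<rfloor> + 5 / 4) * s"
    proof -
      have a1: "- (s/4) < w \<bullet> j - u \<bullet> j" "w \<bullet> j - u \<bullet> j < s/4" using wj[OF j] unfolding abs_less_iff by linarith+
      have f2: "u \<bullet> j < real_of_int \<lfloor>u \<bullet> j / s\<rfloor> * s + s" using fl(2)[of j] by (simp add: distrib_right)
      have g1: "real_of_int \<lfloor>u \<bullet> j / s\<rfloor> * s - 1 / 4 * s < w \<bullet> j" using fl(1)[of j] a1 by linarith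
      have g2: "w \<bullet> j < real_of_int \<lfloor>u \<bullet> j / s\<rfloor> * s + 5 / 4 * s" using f2 a1 by linarith
      show ?thesis unfolding left_diff_distrib distrib_right using g1 g2 by blast
    qed
  qed
qed

lemma cellbox_diam:
  fixes v v' :: "'b::euclidean_space"
  assumes s: "s > 0" and v: "v \<in> cbox (lo_of s k) (hi_of s k)" and v': "v' \<in> cbox (lo_of s k) (hi_of s k)"
  shows "dist v v' \<le> 3 / 2 * s * DIM('b)"
proof -
  have "dist v v' = norm (v - v')" by (simp add: dist_norm)
  also have "\<dots> \<le> (\<Sum>j\<in>Basis. \<bar>(v - v') \<bullet> j\<bar>)" by (rule norm_le_l1)
  also have "\<dots> \<le> (\<Sum>j\<in>(Basis::'b set). 3 / 2 * s)"
  proof (rule sum_mono)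
    fix j :: 'b assume j: "j \<in> Basis"
    have a: "(real_of_int (k j) - 1/4) * s \<le> v \<bullet> j" "v \<bullet> j \<le> (real_of_int (k j) + 5/4) * s"
      "(real_of_int (k j) - 1/4) * s \<le> v' \<bullet> j" "v' \<bullet> j \<le> (real_of_int (k j) + 5/4) * s"
      using v v' j unfolding mem_cellbox by auto
    have e: "(real_of_int (k j) + 5/4) * s - (real_of_int (k j) - 1/4) * s = 3 / 2 * s" by (simp add: algebra_simps)
    have "\<bar>v \<bullet> j - v' \<bullet> j\<bar> \<le> (real_of_int (k j) + 5/4) * s - (real_of_int (k j) - 1/4) * s"
      unfolding abs_le_iff using a by linarith
    then show "\<bar>(v - v') \<bullet> j\<bar> \<le> 3 / 2 * s" unfolding e by (simp add: inner_diff_left)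
  qed
  also have "\<dots> = 3 / 2 * s * DIM('b)" by simp
  finally show ?thesis .
qed

lemma cellbox_disjoint:
  fixes k k' :: "'b::euclidean_space \<Rightarrow> int"
  assumes s: "s > 0" and j: "j \<in> Basis" and ne: "k j \<noteq> k' j" and par: "odd (k j) \<longleftrightarrow> odd (k' j)"
  shows "box (lo_of s k) (hi_of s k) \<inter> box (lo_of s k') (hi_of s k') = {}"
proof -
  have "even (k j - k' j)" using par by simp
  then obtain t where t: "k j - k' j = 2 * t" by (rule evenE)
  then have "t \<noteq> 0" using ne by auto
  then have d2: "k j + 2 \<le> k' j \<or> k' j + 2 \<le> k j" using t by linarith
  show ?thesis
  proof (rule ccontr)
    assume "box (lo_of s k) (hi_of s k) \<inter> box (lo_of s k') (hi_of s k') \<noteq> {}"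
    then obtain v where "v \<in> box (lo_of s k) (hi_of s k)" "v \<in> box (lo_of s k') (hi_of s k')" by blast
    then have a: "(real_of_int (k j) - 1/4) * s < v \<bullet> j" "v \<bullet> j < (real_of_int (k j) + 5/4) * s"
       "(real_of_int (k' j) - 1/4) * s < v \<bullet> j" "v \<bullet> j < (real_of_int (k' j) + 5/4) * s"
      using j unfolding mem_cellbox by auto
    from d2 show False
    proof
      assume "k j + 2 \<le> k' j"
      then have "real_of_int (k j) + 2 \<le> real_of_int (k' j)" by linarith
      then have "(real_of_int (k j) + 5/4) * s \<le> (real_of_int (k' j) - 1/4) * s" using s
        by (intro mult_right_mono) auto
      then show False using a by linarith
    next
      assume "k' j + 2 \<le> k j"
      then have "real_of_int (k' j) + 2 \<le> real_of_int (k j)" by linarith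
      then have "(real_of_int (k' j) + 5/4) * s \<le> (real_of_int (k j) - 1/4) * s" using s
        by (intro mult_right_mono) auto
      then show False using a by linarith
    qed
  qed
qed

lemma lo_hi_cong:
  assumes "\<And>j. j \<in> Basis \<Longrightarrow> k j = k' j"
  shows "lo_of s k = lo_of s k'" "hi_of s k = hi_of s k'"
  unfolding lo_of_def hi_of_def using assms by (auto intro!: sum.cong)

lemma finite_pos_lb:
  fixes P :: "'x \<Rightarrow> real \<Rightarrow> bool"
  assumes "finite A" "\<And>x. x \<in> A \<Longrightarrow> \<exists>e>0. P x e" "\<And>x e e'. P x e \<Longrightarrow> 0 < e' \<Longrightarrow> e' \<le> e \<Longrightarrow> P x e'"
  shows "\<exists>e>0. \<forall>x\<in>A. P x e"
  using assms(1,2)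
proof (induction A rule: finite_induct)
  case empty then show ?case using zero_less_one by blast
next
  case (insert x A)
  then obtain e where e: "e > 0" "\<forall>y\<in>A. P y e" by blast
  obtain e' where e': "e' > 0" "P x e'" using insert by blast
  show ?case
  proof (intro exI[of _ "min e e'"] conjI ballI)
    show "min e e' > 0" using e e' by simp
    fix y assume "y \<in> insert x A"
    then show "P y (min e e')" using e e' assms(3) by (metis insertE min.cobounded1 min.cobounded2 min_less_iff_conj)
  qed
qed

lemma block_compose:
  fixes X :: "'a::metric_space set" and a b :: "int \<Rightarrow> 'a" and S :: "int \<Rightarrow> 'a set"
  assumes stage: "\<And>i Fx. i \<in> I \<Longrightarrow> finite Fx \<Longrightarrow> Fx \<subseteq> X \<Longrightarrow> a i \<notin> Fx \<Longrightarrow> b i \<notin> Fx \<Longrightarrow>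
      \<exists>\<Phi> \<Phi>'. homeomorphism X X \<Phi> \<Phi>' \<and> \<Phi> (a i) = b i \<and> (\<forall>z\<in>Fx. \<Phi> z = z)
         \<and> (\<forall>z\<in>X - S i. \<Phi> z = z) \<and> (\<forall>z\<in>X \<inter> S i. \<Phi> z \<in> S i)"
    and abX: "\<forall>i\<in>I. a i \<in> X \<and> b i \<in> X" and fin: "finite I"
    and ainj: "inj_on a I" and binj: "inj_on b I" and ab: "\<forall>i\<in>I. \<forall>j\<in>I. i \<noteq> j \<longrightarrow> a i \<noteq> b j"
  shows "distinct L \<Longrightarrow> set L \<subseteq> I \<Longrightarrow> set L \<inter> Pre = {} \<Longrightarrow> Pre \<subseteq> I \<Longrightarrow>
    (\<forall>i\<in>set L. \<forall>j\<in>set L. S i = S j \<or> S i \<inter> S j = {}) \<Longrightarrow>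
    \<exists>\<Phi> \<Phi>'. homeomorphism X X \<Phi> \<Phi>' \<and> (\<forall>i\<in>set L. \<Phi> (a i) = b i) \<and> (\<forall>j\<in>Pre. \<Phi> (b j) = b j)
      \<and> (\<forall>j\<in>I - Pre - set L. \<Phi> (a j) = a j) \<and> (\<forall>z\<in>X. \<Phi> z = z \<or> (\<exists>i\<in>set L. z \<in> S i \<and> \<Phi> z \<in> S i))"
proof (induction L arbitrary: Pre)
  case Nil
  show ?case by (intro exI[of _ id] conjI) (auto intro: homeomorphism_ident)
next
  case (Cons i L)
  have iI: "i \<in> I" and iPre: "i \<notin> Pre" and iL: "i \<notin> set L" using Cons.prems by auto
  define Fx where "Fx = b ` Pre \<union> a ` (I - Pre - {i})"
  have "finite Pre" using fin Cons.prems(4) by (rule finite_subset[rotated])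
  then have finFx: "finite Fx" unfolding Fx_def using fin by simp
  have FxX: "Fx \<subseteq> X" unfolding Fx_def using abX Cons.prems(4) by auto
  have aF: "a i \<notin> Fx"
  proof
    assume "a i \<in> Fx"
    then show False unfolding Fx_def
    proof
      assume "a i \<in> b ` Pre"
      then obtain j where j: "j \<in> Pre" "a i = b j" by blast
      then have jj: "j \<in> I" "i \<noteq> j" using iPre Cons.prems(4) by auto
      have "a i \<noteq> b j" using ab jj iI by blast
      then show False using j(2) by simp
    next
      assume "a i \<in> a ` (I - Pre - {i})"
      then obtain j where j: "j \<in> I" "j \<noteq> i" "a i = a j" by blast
      then show False using inj_onD[OF ainj j(3) iI j(1)] by simp
    qed
  qed
  have bF: "b i \<notin> Fx"
  proof
    assume "b i \<in> Fx"
    then show False unfolding Fx_def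
    proof
      assume "b i \<in> b ` Pre"
      then obtain j where j: "j \<in> Pre" "b i = b j" by blast
      then have "j \<in> I" "i \<noteq> j" using iPre Cons.prems(4) by auto
      then show False using inj_onD[OF binj j(2) iI] by simp
    next
      assume "b i \<in> a ` (I - Pre - {i})"
      then obtain j where j: "j \<in> I" "j \<noteq> i" "b i = a j" by blast
      have "a j \<noteq> b i" using ab j(1) iI j(2) by blast
      then show False using j(3) by simp
    qed
  qed
  obtain \<Phi>i \<Phi>i' where Pi: "homeomorphism X X \<Phi>i \<Phi>i'" "\<Phi>i (a i) = b i" "\<forall>z\<in>Fx. \<Phi>i z = z"
      "\<forall>z\<in>X - S i. \<Phi>i z = z" "\<forall>z\<in>X \<inter> S i. \<Phi>i z \<in> S i"
    using stage[OF iI finFx FxX aF bF] by blast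
  have IHp: "distinct L" "set L \<subseteq> I" "set L \<inter> (Pre \<union> {i}) = {}" "Pre \<union> {i} \<subseteq> I"
      "\<forall>i\<in>set L. \<forall>j\<in>set L. S i = S j \<or> S i \<inter> S j = {}"
    using Cons.prems by auto
  obtain \<Psi> \<Psi>' where Ps: "homeomorphism X X \<Psi> \<Psi>'" "\<forall>k\<in>set L. \<Psi> (a k) = b k" "\<forall>j\<in>Pre \<union> {i}. \<Psi> (b j) = b j"
      "\<forall>j\<in>I - (Pre \<union> {i}) - set L. \<Psi> (a j) = a j" "\<forall>z\<in>X. \<Psi> z = z \<or> (\<exists>k\<in>set L. z \<in> S k \<and> \<Psi> z \<in> S k)"
    using Cons.IH[OF IHp] by blast
  show ?case
  proof (rule exI[of _ "\<Psi> \<circ> \<Phi>i"], rule exI[of _ "\<Phi>i' \<circ> \<Psi>'"], intro conjI ballI)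
    show "homeomorphism X X (\<Psi> \<circ> \<Phi>i) (\<Phi>i' \<circ> \<Psi>')" by (rule homeomorphism_compose[OF Pi(1) Ps(1)])
  next
    fix k assume k: "k \<in> set (i # L)"
    show "(\<Psi> \<circ> \<Phi>i) (a k) = b k"
    proof (cases "k = i")
      case True then show ?thesis using Pi(2) Ps(3) by simp
    next
      case False
      then have "k \<in> set L" using k by simp
      then have "k \<in> I - Pre - {i}" using Cons.prems False by auto
      then have "\<Phi>i (a k) = a k" using Pi(3) unfolding Fx_def by blast
      then show ?thesis using Ps(2) \<open>k \<in> set L\<close> by simp
    qed
  next
    fix j assume "j \<in> Pre"
    then show "(\<Psi> \<circ> \<Phi>i) (b j) = b j" using Pi(3) Ps(3) unfolding Fx_def by auto
  next
    fix j assume j: "j \<in> I - Pre - set (i # L)"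
    then have "\<Phi>i (a j) = a j" using Pi(3) unfolding Fx_def by auto
    then show "(\<Psi> \<circ> \<Phi>i) (a j) = a j" using Ps(4) j by auto
  next
    fix z assume zX: "z \<in> X"
    show "(\<Psi> \<circ> \<Phi>i) z = z \<or> (\<exists>k\<in>set (i # L). z \<in> S k \<and> (\<Psi> \<circ> \<Phi>i) z \<in> S k)"
    proof (cases "z \<in> S i")
      case False
      then have "\<Phi>i z = z" using Pi(4) zX by blast
      then show ?thesis using Ps(5) zX by auto
    next
      case True
      have w: "\<Phi>i z \<in> S i" "\<Phi>i z \<in> X" using Pi(5) zX True Pi(1) by (auto simp: homeomorphism_def)
      from Ps(5) w(2) consider "\<Psi> (\<Phi>i z) = \<Phi>i z" | k where "k \<in> set L" "\<Phi>i z \<in> S k" "\<Psi> (\<Phi>i z) \<in> S k" by blast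
      then show ?thesis
      proof cases
        case 1 then show ?thesis using True w by auto
      next
        case 2
        have "k \<in> set (i # L)" "i \<in> set (i # L)" using 2 by auto
        then have "S k = S i \<or> S k \<inter> S i = {}" using Cons.prems(5) by blast
        then have "S k = S i" using 2 w(1) by blast
        then show ?thesis using True 2 by auto
      qed
    qed
  qed
qed

lemma keys_compose:
  fixes X :: "'a::metric_space set" and a b :: "int \<Rightarrow> 'a" and S :: "int \<Rightarrow> 'a set" and key :: "int \<Rightarrow> 'k"
  assumes stage: "\<And>i Fx. i \<in> I \<Longrightarrow> finite Fx \<Longrightarrow> Fx \<subseteq> X \<Longrightarrow> a i \<notin> Fx \<Longrightarrow> b i \<notin> Fx \<Longrightarrow>
      \<exists>\<Phi> \<Phi>'. homeomorphism X X \<Phi> \<Phi>' \<and> \<Phi> (a i) = b i \<and> (\<forall>z\<in>Fx. \<Phi> z = z)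
         \<and> (\<forall>z\<in>X - S i. \<Phi> z = z) \<and> (\<forall>z\<in>X \<inter> S i. \<Phi> z \<in> S i)"
    and abX: "\<forall>i\<in>I. a i \<in> X \<and> b i \<in> X" and fin: "finite I"
    and ainj: "inj_on a I" and binj: "inj_on b I" and ab: "\<forall>i\<in>I. \<forall>j\<in>I. i \<noteq> j \<longrightarrow> a i \<noteq> b j"
    and diam: "\<And>i u v. i \<in> I \<Longrightarrow> u \<in> X \<inter> S i \<Longrightarrow> v \<in> X \<inter> S i \<Longrightarrow> dist u v \<le> D"
    and blk: "\<And>i j. i \<in> I \<Longrightarrow> j \<in> I \<Longrightarrow> key i = key j \<Longrightarrow> S i = S j \<or> S i \<inter> S j = {}"
    and D0: "D \<ge> 0"
  shows "distinct ks \<Longrightarrow> Pre \<subseteq> I \<Longrightarrow> (\<forall>j\<in>Pre. key j \<notin> set ks) \<Longrightarrow>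
    \<exists>\<Phi> \<Phi>'. homeomorphism X X \<Phi> \<Phi>' \<and> (\<forall>i\<in>I. key i \<in> set ks \<longrightarrow> \<Phi> (a i) = b i) \<and> (\<forall>j\<in>Pre. \<Phi> (b j) = b j)
      \<and> (\<forall>j\<in>I - Pre. key j \<notin> set ks \<longrightarrow> \<Phi> (a j) = a j) \<and> (\<forall>z\<in>X. dist (\<Phi> z) z \<le> real (length ks) * D)"
proof (induction ks arbitrary: Pre)
  case Nil
  show ?case by (intro exI[of _ id] conjI) (auto intro: homeomorphism_ident)
next
  case (Cons \<kappa> ks)
  define B where "B = {i\<in>I. key i = \<kappa>}"
  define L where "L = sorted_list_of_set B"
  have finB: "finite B" unfolding B_def using fin by simp
  have L: "distinct L" "set L = B" unfolding L_def using finB by auto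
  have bp: "distinct L" "set L \<subseteq> I" "set L \<inter> Pre = {}" "Pre \<subseteq> I"
      "\<forall>i\<in>set L. \<forall>j\<in>set L. S i = S j \<or> S i \<inter> S j = {}"
    using L Cons.prems blk unfolding B_def by auto
  obtain \<Phi>k \<Phi>k' where Pk: "homeomorphism X X \<Phi>k \<Phi>k'" "\<forall>i\<in>set L. \<Phi>k (a i) = b i" "\<forall>j\<in>Pre. \<Phi>k (b j) = b j"
      "\<forall>j\<in>I - Pre - set L. \<Phi>k (a j) = a j" "\<forall>z\<in>X. \<Phi>k z = z \<or> (\<exists>i\<in>set L. z \<in> S i \<and> \<Phi>k z \<in> S i)"
    using block_compose[OF stage abX fin ainj binj ab bp] by blast
  have Pkd: "dist (\<Phi>k z) z \<le> D" if zX: "z \<in> X" for z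
  proof -
    have "\<Phi>k z \<in> X" using Pk(1) zX by (auto simp: homeomorphism_def)
    from Pk(5) zX consider "\<Phi>k z = z" | i where "i \<in> set L" "z \<in> S i" "\<Phi>k z \<in> S i" by blast
    then show ?thesis
    proof cases
      case 1 then show ?thesis using D0 by simp
    next
      case 2
      then show ?thesis using diam[of i "\<Phi>k z" z] bp(2) zX \<open>\<Phi>k z \<in> X\<close> by auto
    qed
  qed
  have ip: "distinct ks" "Pre \<union> B \<subseteq> I" "\<forall>j\<in>Pre \<union> B. key j \<notin> set ks"
    using Cons.prems unfolding B_def by auto
  obtain \<Psi> \<Psi>' where Ps: "homeomorphism X X \<Psi> \<Psi>'" "\<forall>i\<in>I. key i \<in> set ks \<longrightarrow> \<Psi> (a i) = b i"
      "\<forall>j\<in>Pre \<union> B. \<Psi> (b j) = b j" "\<forall>j\<in>I - (Pre \<union> B). key j \<notin> set ks \<longrightarrow> \<Psi> (a j) = a j"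
      "\<forall>z\<in>X. dist (\<Psi> z) z \<le> real (length ks) * D"
    using Cons.IH[OF ip] by blast
  show ?case
  proof (rule exI[of _ "\<Psi> \<circ> \<Phi>k"], rule exI[of _ "\<Phi>k' \<circ> \<Psi>'"], intro conjI ballI impI)
    show "homeomorphism X X (\<Psi> \<circ> \<Phi>k) (\<Phi>k' \<circ> \<Psi>')" by (rule homeomorphism_compose[OF Pk(1) Ps(1)])
  next
    fix i assume iI: "i \<in> I" and ki: "key i \<in> set (\<kappa> # ks)"
    show "(\<Psi> \<circ> \<Phi>k) (a i) = b i"
    proof (cases "key i = \<kappa>")
      case True
      then have "i \<in> B" using iI unfolding B_def by simp
      then show ?thesis using Pk(2) Ps(3) L(2) by simp
    next
      case False
      then have "i \<notin> Pre" using Cons.prems(3) ki by auto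
      moreover have "i \<notin> set L" using False L(2) unfolding B_def by simp
      ultimately have "\<Phi>k (a i) = a i" using Pk(4) iI by blast
      then show ?thesis using Ps(2) iI ki False by simp
    qed
  next
    fix j assume "j \<in> Pre"
    then show "(\<Psi> \<circ> \<Phi>k) (b j) = b j" using Pk(3) Ps(3) by simp
  next
    fix j assume j: "j \<in> I - Pre" and kj: "key j \<notin> set (\<kappa> # ks)"
    then have "j \<notin> set L" using L(2) unfolding B_def by simp
    then have "\<Phi>k (a j) = a j" using Pk(4) j by blast
    moreover have "j \<in> I - (Pre \<union> B)" using j kj unfolding B_def by simp
    ultimately show "(\<Psi> \<circ> \<Phi>k) (a j) = a j" using Ps(4) kj by simp
  next
    fix z assume zX: "z \<in> X"
    have w: "\<Phi>k z \<in> X" using Pk(1) zX by (auto simp: homeomorphism_def)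
    have "dist ((\<Psi> \<circ> \<Phi>k) z) z \<le> dist (\<Psi> (\<Phi>k z)) (\<Phi>k z) + dist (\<Phi>k z) z"
      by (simp add: dist_triangle)
    also have "\<dots> \<le> real (length ks) * D + D" using Ps(5) w Pkd zX by (simp add: add_mono)
    finally show "dist ((\<Psi> \<circ> \<Phi>k) z) z \<le> real (length (\<kappa> # ks)) * D" by (simp add: algebra_simps)
  qed
qed

lemma glue_cont:
  fixes X :: "'a::metric_space set" and \<phi> :: "'b::euclidean_space \<Rightarrow> 'a"
  assumes hom: "homeomorphism V U \<phi> \<psi>" and UX: "openin (top_of_set X) U"
    and bB: "bounded B" and clB: "closure B \<subseteq> V"
    and cnu: "continuous_on UNIV \<nu>" and nfix: "\<And>v. v \<notin> B \<Longrightarrow> \<nu> v = v" and nV: "\<And>v. v \<in> V \<Longrightarrow> \<nu> v \<in> V"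
  shows "continuous_on X (\<lambda>z. if z \<in> U then \<phi> (\<nu> (\<psi> z)) else z)"
proof -
  have UsX: "U \<subseteq> X" using UX by (rule openin_imp_subset)
  have BV: "B \<subseteq> V" using clB closure_subset by blast
  have cphi: "continuous_on V \<phi>" and cpsi: "continuous_on U \<psi>" using hom by (auto simp: homeomorphism_def)
  have psiU: "\<psi> ` U \<subseteq> V" and phiV: "\<phi> ` V \<subseteq> U" using hom by (auto simp: homeomorphism_def)
  have phipsi: "\<And>z. z \<in> U \<Longrightarrow> \<phi> (\<psi> z) = z" using hom by (simp add: homeomorphism_apply2)
  define C where "C = \<phi> ` closure B"
  have cC: "compact C" unfolding C_def
    using bB clB by (intro compact_continuous_image continuous_on_subset[OF cphi]) (auto simp: compact_closure)
  have CU: "C \<subseteq> U" unfolding C_def using clB phiV by blast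
  have XU: "X = U \<union> (X - C)" using CU UsX by blast
  have "closed C" using cC by (rule compact_imp_closed)
  moreover have "X - C = X \<inter> (- C)" by blast
  ultimately have opC: "openin (top_of_set X) (X - C)" by (simp add: openin_open_Int open_Compl)
  have c1: "continuous_on U (\<lambda>z. \<phi> (\<nu> (\<psi> z)))"
  proof (rule continuous_on_compose2[OF cphi _ ])
    show "continuous_on U (\<lambda>z. \<nu> (\<psi> z))"
      by (rule continuous_on_compose2[OF continuous_on_subset[OF cnu] cpsi]) auto
    show "(\<lambda>z. \<nu> (\<psi> z)) ` U \<subseteq> V" using psiU nV by blast
  qed
  have c1': "continuous_on U (\<lambda>z. if z \<in> U then \<phi> (\<nu> (\<psi> z)) else z)"
    by (rule continuous_on_eq[OF c1]) simp
  have c2': "continuous_on (X - C) (\<lambda>z. if z \<in> U then \<phi> (\<nu> (\<psi> z)) else z)"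
  proof (rule continuous_on_eq[OF continuous_on_id])
    fix z assume z: "z \<in> X - C"
    show "z = (if z \<in> U then \<phi> (\<nu> (\<psi> z)) else z)"
    proof (cases "z \<in> U")
      case True
      have "\<psi> z \<notin> B"
      proof
        assume "\<psi> z \<in> B"
        then have "\<phi> (\<psi> z) \<in> C" unfolding C_def using closure_subset by blast
        then show False using phipsi[OF True] z by simp
      qed
      then show ?thesis using True nfix phipsi by simp
    qed simp
  qed
  have "continuous_on (U \<union> (X - C)) (\<lambda>z. if z \<in> U then \<phi> (\<nu> (\<psi> z)) else z)"
    by (rule continuous_on_Un_local_open) (use UX opC c1' c2' XU[symmetric] in auto)
  then show ?thesis using XU by simp
qed

lemma chart_stage:
  fixes X :: "'a::metric_space set" and \<phi> :: "'b::euclidean_space \<Rightarrow> 'a"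
  assumes hom: "homeomorphism V U \<phi> \<psi>" and UX: "openin (top_of_set X) U"
    and oB: "open B" and cB: "connected B" and bB: "bounded B" and clB: "closure B \<subseteq> V"
    and dim: "DIM('b) \<ge> 2" and uB: "u \<in> B" and wB: "w \<in> B"
    and finF: "finite Fx" and uF: "\<phi> u \<notin> Fx" and wF: "\<phi> w \<notin> Fx"
  shows "\<exists>\<Phi> \<Phi>'. homeomorphism X X \<Phi> \<Phi>' \<and> \<Phi> (\<phi> u) = \<phi> w \<and> (\<forall>z\<in>Fx. \<Phi> z = z)
           \<and> (\<forall>z\<in>X - \<phi> ` B. \<Phi> z = z) \<and> (\<forall>z\<in>X \<inter> \<phi> ` B. \<Phi> z \<in> \<phi> ` B)"
proof -
  have UsX: "U \<subseteq> X" using UX by (rule openin_imp_subset)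
  have BV: "B \<subseteq> V" using clB closure_subset by blast
  have psiU: "\<psi> ` U \<subseteq> V" and phiV: "\<phi> ` V \<subseteq> U" using hom by (auto simp: homeomorphism_def)
  have phipsi: "\<And>z. z \<in> U \<Longrightarrow> \<phi> (\<psi> z) = z" using hom by (simp add: homeomorphism_apply2)
  have psiphi: "\<And>v. v \<in> V \<Longrightarrow> \<psi> (\<phi> v) = v" using hom by (simp add: homeomorphism_apply1)
  define Fc where "Fc = \<psi> ` (Fx \<inter> \<phi> ` B)"
  have FcB: "Fc \<subseteq> B" unfolding Fc_def using psiphi BV by auto
  define K where "K = insert None (Some ` Fc)"
  define xf where "xf k = (case k of None \<Rightarrow> u | Some v \<Rightarrow> v)" for k
  define yf where "yf k = (case k of None \<Rightarrow> w | Some v \<Rightarrow> v)" for k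
  have finK: "finite K" unfolding K_def Fc_def using finF by simp
  have KS: "xf k \<in> B \<and> yf k \<in> B" if "k \<in> K" for k
    using that uB wB FcB unfolding K_def xf_def yf_def by auto
  have uFc: "u \<notin> Fc" and wFc: "w \<notin> Fc"
  proof -
    show "u \<notin> Fc"
    proof
      assume "u \<in> Fc"
      then obtain z where z: "z \<in> Fx" "z \<in> \<phi> ` B" "u = \<psi> z" unfolding Fc_def by blast
      then have "z \<in> U" using BV phiV by blast
      then have "\<phi> u = z" using z(3) phipsi by simp
      then show False using uF z(1) by simp
    qed
    show "w \<notin> Fc"
    proof
      assume "w \<in> Fc"
      then obtain z where z: "z \<in> Fx" "z \<in> \<phi> ` B" "w = \<psi> z" unfolding Fc_def by blast
      then have "z \<in> U" using BV phiV by blast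
      then have "\<phi> w = z" using z(3) phipsi by simp
      then show False using wF z(1) by simp
    qed
  qed
  have pw: "pairwise (\<lambda>i j. (xf i \<noteq> xf j) \<and> (yf i \<noteq> yf j)) K"
    unfolding pairwise_def K_def xf_def yf_def using uFc wFc by auto
  have Bne: "B \<noteq> {}" using uB by blast
  obtain \<mu> \<mu>' where mu: "homeomorphism UNIV UNIV \<mu> \<mu>'" "\<And>k. k \<in> K \<Longrightarrow> \<mu> (xf k) = yf k"
      "{x. \<not> (\<mu> x = x \<and> \<mu>' x = x)} \<subseteq> B"
  proof -
    have ah: "UNIV \<subseteq> affine hull B" using affine_hull_open[OF oB Bne] by simp
    show ?thesis
      using homeomorphism_moving_points_exists[OF dim oB cB subset_UNIV finK KS pw subset_UNIV ah cB] that by blast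
  qed
  have mfix: "\<mu> v = v" "\<mu>' v = v" if "v \<notin> B" for v using mu(3) that by auto
  have mm: "\<mu>' (\<mu> v) = v" "\<mu> (\<mu>' v) = v" for v using mu(1) by (auto simp: homeomorphism_def)
  have mB: "\<mu> v \<in> B" "\<mu>' v \<in> B" if "v \<in> B" for v
  proof -
    show "\<mu> v \<in> B"
    proof (rule ccontr)
      assume "\<mu> v \<notin> B"
      then have "\<mu>' (\<mu> v) = \<mu> v" using mfix by blast
      then show False using mm(1)[of v] \<open>\<mu> v \<notin> B\<close> that by simp
    qed
    show "\<mu>' v \<in> B"
    proof (rule ccontr)
      assume "\<mu>' v \<notin> B"
      then have "\<mu> (\<mu>' v) = \<mu>' v" using mfix by blast
      then show False using mm(2)[of v] \<open>\<mu>' v \<notin> B\<close> that by simp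
    qed
  qed
  have mV: "\<mu> v \<in> V" "\<mu>' v \<in> V" if "v \<in> V" for v using mB mfix that BV by (cases "v \<in> B"; auto)+
  have cmu: "continuous_on UNIV \<mu>" "continuous_on UNIV \<mu>'" using mu(1) by (auto simp: homeomorphism_def)
  define \<Phi> where "\<Phi> z = (if z \<in> U then \<phi> (\<mu> (\<psi> z)) else z)" for z
  define \<Phi>' where "\<Phi>' z = (if z \<in> U then \<phi> (\<mu>' (\<psi> z)) else z)" for z
  have PU1: "\<Phi> z \<in> U" if zU: "z \<in> U" for z
  proof -
    have "\<psi> z \<in> V" using psiU zU by blast
    then have "\<mu> (\<psi> z) \<in> V" by (rule mV(1))
    then show ?thesis using zU phiV unfolding \<Phi>_def by auto
  qed
  have PU2: "\<Phi>' z \<in> U" if zU: "z \<in> U" for z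
  proof -
    have "\<psi> z \<in> V" using psiU zU by blast
    then have "\<mu>' (\<psi> z) \<in> V" by (rule mV(2))
    then show ?thesis using zU phiV unfolding \<Phi>'_def by auto
  qed
  note PU = PU1 PU2
  have hX: "homeomorphism X X \<Phi> \<Phi>'"
  proof (rule homeomorphismI)
    show "continuous_on X \<Phi>" unfolding \<Phi>_def
      by (rule glue_cont[OF hom UX bB clB cmu(1)]) (use mfix mV in auto)
    show "continuous_on X \<Phi>'" unfolding \<Phi>'_def
      by (rule glue_cont[OF hom UX bB clB cmu(2)]) (use mfix mV in auto)
    show "\<Phi> ` X \<subseteq> X" using PU UsX unfolding \<Phi>_def by auto
    show "\<Phi>' ` X \<subseteq> X" using PU UsX unfolding \<Phi>'_def by auto
    fix z assume "z \<in> X"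
    show "\<Phi>' (\<Phi> z) = z"
    proof (cases "z \<in> U")
      case True
      have "\<Phi>' (\<Phi> z) = \<phi> (\<mu>' (\<psi> (\<phi> (\<mu> (\<psi> z)))))" using PU(1)[OF True] True unfolding \<Phi>'_def \<Phi>_def by simp
      also have "\<dots> = z" using psiphi mV psiU True mm phipsi by auto
      finally show ?thesis .
    qed (simp add: \<Phi>_def \<Phi>'_def)
  next
    fix z assume "z \<in> X"
    show "\<Phi> (\<Phi>' z) = z"
    proof (cases "z \<in> U")
      case True
      have "\<Phi> (\<Phi>' z) = \<phi> (\<mu> (\<psi> (\<phi> (\<mu>' (\<psi> z)))))" using PU(2)[OF True] True unfolding \<Phi>'_def \<Phi>_def by simp
      also have "\<dots> = z" using psiphi mV psiU True mm phipsi by auto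
      finally show ?thesis .
    qed (simp add: \<Phi>_def \<Phi>'_def)
  qed
  have outside: "\<Phi> z = z" if "z \<notin> \<phi> ` B" for z
  proof (cases "z \<in> U")
    case True
    have "\<psi> z \<notin> B" using that phipsi[OF True] by (metis image_eqI)
    then show ?thesis using True mfix phipsi unfolding \<Phi>_def by simp
  qed (simp add: \<Phi>_def)
  show ?thesis
  proof (rule exI[of _ \<Phi>], rule exI[of _ \<Phi>'], intro conjI ballI)
    show "homeomorphism X X \<Phi> \<Phi>'" by (rule hX)
    have "\<phi> u \<in> U" using uB BV phiV by blast
    then show "\<Phi> (\<phi> u) = \<phi> w" using mu(2)[of None] psiphi uB BV unfolding \<Phi>_def K_def xf_def yf_def by auto
  next
    fix z assume zF: "z \<in> Fx"
    show "\<Phi> z = z"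
    proof (cases "z \<in> \<phi> ` B")
      case True
      then have zU: "z \<in> U" using BV phiV by blast
      have "\<psi> z \<in> Fc" unfolding Fc_def using zF True by blast
      then have "\<mu> (\<psi> z) = \<psi> z" using mu(2)[of "Some (\<psi> z)"] unfolding K_def xf_def yf_def by auto
      then show ?thesis using zU phipsi unfolding \<Phi>_def by simp
    qed (rule outside)
  next
    fix z assume "z \<in> X - \<phi> ` B"
    then show "\<Phi> z = z" using outside by blast
  next
    fix z assume "z \<in> X \<inter> \<phi> ` B"
    then obtain v where v: "v \<in> B" "z = \<phi> v" by blast
    then have "z \<in> U" using BV phiV by blast
    then show "\<Phi> z \<in> \<phi> ` B" using v psiphi BV mB unfolding \<Phi>_def by auto
  qed
qed

lemma moving_lemma:
  fixes X :: "'a::metric_space set"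
  assumes cX: "compact X" and man: "is_manifold_dim X TYPE('b::euclidean_space)"
    and dim: "DIM('b) \<ge> 2" and d0: "\<delta>0 > 0"
  shows "\<exists>\<eta>>0. \<forall>I a b. finite (I::int set) \<and> (\<forall>i\<in>I. a i \<in> X \<and> b i \<in> X \<and> dist (a i) (b i) < \<eta>)
     \<and> inj_on a I \<and> inj_on b I \<and> (\<forall>i\<in>I. \<forall>j\<in>I. i \<noteq> j \<longrightarrow> a i \<noteq> b j) \<longrightarrow>
     (\<exists>\<Phi> \<Phi>'. homeomorphism X X \<Phi> \<Phi>' \<and> (\<forall>i\<in>I. \<Phi> (a i) = b i) \<and> (\<forall>z\<in>X. dist (\<Phi> z) z \<le> \<delta>0))"
proof -
  define CP where "CP G \<longleftrightarrow> open G \<and> (\<exists>(\<phi>::'b \<Rightarrow> 'a) \<psi> V U c r. homeomorphism V U \<phi> \<psi> \<and>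
      openin (top_of_set X) U \<and> r > 0 \<and> cball c (2 * r) \<subseteq> V \<and> X \<inter> G = \<phi> ` ball c r)" for G
  have cov: "\<exists>G. CP G \<and> p \<in> G" if pX: "p \<in> X" for p
  proof -
    obtain U and V :: "'b set" where UV: "openin (top_of_set X) U" "p \<in> U" "open V" "V homeomorphic U"
      using man pX unfolding is_manifold_dim_def by blast
    then obtain \<phi> \<psi> where hom: "homeomorphism V U \<phi> \<psi>" unfolding homeomorphic_def by blast
    define c where "c = \<psi> p"
    have cV: "c \<in> V" and pc: "\<phi> c = p" using hom UV(2) unfolding c_def homeomorphism_def by auto
    obtain e where e: "e > 0" "ball c e \<subseteq> V" using UV(3) cV open_contains_ball by blast
    define r where "r = e / 3"
    have r: "r > 0" "cball c (2 * r) \<subseteq> V" using e unfolding r_def by (auto simp: subset_iff)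
    have "ball c r \<subseteq> V" using r by auto
    then have "ball c r = V \<inter> ball c r" by blast
    then have "openin (top_of_set V) (ball c r)" by (metis openin_open_Int open_ball)
    then have "openin (top_of_set U) (\<phi> ` ball c r)" by (rule homeomorphism_imp_open_map[OF hom])
    then have "openin (top_of_set X) (\<phi> ` ball c r)" using UV(1) by (rule openin_trans)
    then obtain G where G: "open G" "\<phi> ` ball c r = X \<inter> G" unfolding openin_open by blast
    have "p \<in> \<phi> ` ball c r" using pc r(1) by force
    then have "p \<in> G" using G by blast
    then show ?thesis unfolding CP_def using G hom UV(1) r by metis
  qed
  have opCP: "\<And>G. G \<in> {G. CP G} \<Longrightarrow> open G" unfolding CP_def by blast
  have "X \<subseteq> \<Union>{G. CP G}" using cov by blast
  then obtain \<G> where \<G>: "\<G> \<subseteq> {G. CP G}" "finite \<G>" "X \<subseteq> \<Union>\<G>"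
    by (rule compactE[OF cX _ opCP])
  have "\<forall>G\<in>\<G>. \<exists>(\<phi>::'b \<Rightarrow> 'a) \<psi> V U c r. homeomorphism V U \<phi> \<psi> \<and>
      openin (top_of_set X) U \<and> r > 0 \<and> cball c (2 * r) \<subseteq> V \<and> X \<inter> G = \<phi> ` ball c r"
    using \<G>(1) unfolding CP_def by blast
  then obtain \<phi> :: "'a set \<Rightarrow> 'b \<Rightarrow> 'a" and \<psi> V U c r where ch: "\<And>G. G \<in> \<G> \<Longrightarrow>
      homeomorphism (V G) (U G) (\<phi> G) (\<psi> G) \<and> openin (top_of_set X) (U G) \<and> r G > 0
      \<and> cball (c G) (2 * r G) \<subseteq> V G \<and> X \<inter> G = \<phi> G ` ball (c G) (r G)"
    by metis
  have op\<G>: "\<And>G. G \<in> \<G> \<Longrightarrow> open G" using \<G>(1) opCP by blast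
  obtain \<epsilon>L where \<epsilon>L: "\<epsilon>L > 0" "\<And>x. x \<in> X \<Longrightarrow> \<exists>G\<in>\<G>. ball x \<epsilon>L \<subseteq> G"
    using Heine_Borel_lemma[OF cX \<G>(3) op\<G>] by blast
  define n where "n = DIM('b)"
  have n2: "n \<ge> 2" using dim unfolding n_def .
  define M where "M = card \<G> * 2 ^ n"
  define D where "D = \<delta>0 / (real M + 1)"
  have D: "D > 0" "real M * D \<le> \<delta>0"
  proof -
    show "D > 0" unfolding D_def using d0 by simp
    have "(real M + 1) * D = \<delta>0" unfolding D_def by simp
    then show "real M * D \<le> \<delta>0" using \<open>D > 0\<close> by (simp add: algebra_simps)
  qed
  define P where "P G \<sigma> \<longleftrightarrow> \<sigma> \<le> r G \<and> (\<forall>x\<in>cball (c G) (2 * r G). \<forall>x'\<in>cball (c G) (2 * r G).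
      dist x' x < \<sigma> \<longrightarrow> dist (\<phi> G x') (\<phi> G x) < D)" for G \<sigma>
  have "\<exists>\<sigma>>0. \<forall>G\<in>\<G>. P G \<sigma>"
  proof (rule finite_pos_lb[OF \<G>(2)])
    fix G assume G: "G \<in> \<G>"
    have "continuous_on (cball (c G) (2 * r G)) (\<phi> G)"
      using ch[OF G] continuous_on_subset by (metis homeomorphism_cont1)
    then have "uniformly_continuous_on (cball (c G) (2 * r G)) (\<phi> G)"
      by (intro compact_uniformly_continuous) auto
    then obtain d where d: "d > 0" "\<forall>x\<in>cball (c G) (2 * r G). \<forall>x'\<in>cball (c G) (2 * r G).
      dist x' x < d \<longrightarrow> dist (\<phi> G x') (\<phi> G x) < D"
      unfolding uniformly_continuous_on_def using D(1) by blast
    show "\<exists>e>0. P G e"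
      using d ch[OF G] unfolding P_def by (intro exI[of _ "min d (r G)"]) auto
  next
    fix G e e' assume "P G e" "0 < e'" "e' \<le> e"
    then show "P G e'" unfolding P_def by fastforce
  qed
  then obtain \<sigma> where \<sigma>: "\<sigma> > 0" "\<forall>G\<in>\<G>. P G \<sigma>" by blast
  define s where "s = \<sigma> / (4 * real n)"
  have s: "s > 0" "3 / 2 * s * real n < \<sigma>" using \<sigma> n2 unfolding s_def by (auto simp: field_simps)
  define Q where "Q G e \<longleftrightarrow> (\<forall>z\<in>\<phi> G ` cball (c G) (r G). \<forall>z'\<in>\<phi> G ` cball (c G) (r G).
      dist z' z < e \<longrightarrow> dist (\<psi> G z') (\<psi> G z) < s / 4)" for G e
  have "\<exists>e>0. \<forall>G\<in>\<G>. Q G e"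
  proof (rule finite_pos_lb[OF \<G>(2)])
    fix G assume G: "G \<in> \<G>"
    have hom: "homeomorphism (V G) (U G) (\<phi> G) (\<psi> G)" and sub: "cball (c G) (2 * r G) \<subseteq> V G"
      and rG: "r G > 0" using ch[OF G] by auto
    have "cball (c G) (r G) \<subseteq> cball (c G) (2 * r G)" using rG by (intro subset_cball) simp
    then have sub2: "cball (c G) (r G) \<subseteq> V G" using sub by blast
    have K: "compact (\<phi> G ` cball (c G) (r G))"
      using hom sub2 by (intro compact_continuous_image continuous_on_subset[OF homeomorphism_cont1[OF hom]]) auto
    have "\<phi> G ` cball (c G) (r G) \<subseteq> U G" using hom sub2 unfolding homeomorphism_def by blast
    then have "continuous_on (\<phi> G ` cball (c G) (r G)) (\<psi> G)"
      using homeomorphism_cont2[OF hom] continuous_on_subset by blast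
    then have "uniformly_continuous_on (\<phi> G ` cball (c G) (r G)) (\<psi> G)"
      using K by (intro compact_uniformly_continuous)
    moreover have "s / 4 > 0" using s by simp
    ultimately show "\<exists>e>0. Q G e" unfolding uniformly_continuous_on_def Q_def by blast
  next
    fix G e e' assume "Q G e" "0 < e'" "e' \<le> e"
    then show "Q G e'" unfolding Q_def by fastforce
  qed
  then obtain \<eta>1 where \<eta>1: "\<eta>1 > 0" "\<forall>G\<in>\<G>. Q G \<eta>1" by blast
  define \<eta> where "\<eta> = min \<epsilon>L \<eta>1"
  have \<eta>: "\<eta> > 0" "\<eta> \<le> \<epsilon>L" "\<eta> \<le> \<eta>1" using \<epsilon>L \<eta>1 unfolding \<eta>_def by auto
  show ?thesis
  proof (intro exI[of _ \<eta>] conjI allI impI)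
    show "\<eta> > 0" by (rule \<eta>(1))
    fix I :: "int set" and a b
    assume H: "finite I \<and> (\<forall>i\<in>I. a i \<in> X \<and> b i \<in> X \<and> dist (a i) (b i) < \<eta>)
     \<and> inj_on a I \<and> inj_on b I \<and> (\<forall>i\<in>I. \<forall>j\<in>I. i \<noteq> j \<longrightarrow> a i \<noteq> b j)"
    then have finI: "finite I" and abX: "\<forall>i\<in>I. a i \<in> X \<and> b i \<in> X" and dab: "\<And>i. i \<in> I \<Longrightarrow> dist (a i) (b i) < \<eta>"
      and ainj: "inj_on a I" and binj: "inj_on b I" and ab: "\<forall>i\<in>I. \<forall>j\<in>I. i \<noteq> j \<longrightarrow> a i \<noteq> b j"
      by auto
    have "\<forall>i\<in>I. \<exists>G\<in>\<G>. ball (a i) \<epsilon>L \<subseteq> G" using \<epsilon>L(2) abX by blast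
    then obtain Gi where Gi: "\<And>i. i \<in> I \<Longrightarrow> Gi i \<in> \<G> \<and> ball (a i) \<epsilon>L \<subseteq> Gi i" by metis
    define u where "u i = \<psi> (Gi i) (a i)" for i
    define w where "w i = \<psi> (Gi i) (b i)" for i
    have F1: "u i \<in> ball (c (Gi i)) (r (Gi i)) \<and> \<phi> (Gi i) (u i) = a i \<and> w i \<in> ball (c (Gi i)) (r (Gi i)) \<and> \<phi> (Gi i) (w i) = b i
       \<and> dist (u i) (w i) < s / 4" if iI: "i \<in> I" for i
    proof -
      define G where "G = Gi i"
      have G: "G \<in> \<G>" "ball (a i) \<epsilon>L \<subseteq> G" using Gi[OF iI] unfolding G_def by auto
      have hom: "homeomorphism (V G) (U G) (\<phi> G) (\<psi> G)" and sub: "cball (c G) (2 * r G) \<subseteq> V G"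
        and rG: "r G > 0" and XG: "X \<inter> G = \<phi> G ` ball (c G) (r G)" using ch[OF G(1)] by auto
      have "cball (c G) (r G) \<subseteq> cball (c G) (2 * r G)" using rG by (intro subset_cball) simp
      then have ballV: "ball (c G) (r G) \<subseteq> V G" using sub ball_subset_cball by blast
      have aG: "a i \<in> X \<inter> G" using G(2) abX iI \<epsilon>L(1) by auto
      have "dist (a i) (b i) < \<epsilon>L" using dab[OF iI] \<eta> by simp
      then have bG: "b i \<in> X \<inter> G" using G(2) abX iI by auto
      obtain va where va: "va \<in> ball (c G) (r G)" "a i = \<phi> G va" using aG XG by blast
      obtain vb where vb: "vb \<in> ball (c G) (r G)" "b i = \<phi> G vb" using bG XG by blast
      have ua: "u i = va" unfolding u_def G_def[symmetric] using va ballV hom by (simp add: homeomorphism_apply1 subset_iff)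
      have wb: "w i = vb" unfolding w_def G_def[symmetric] using vb ballV hom by (simp add: homeomorphism_apply1 subset_iff)
      have "Q G \<eta>1" using \<eta>1 G(1) by blast
      moreover have "a i \<in> \<phi> G ` cball (c G) (r G)" "b i \<in> \<phi> G ` cball (c G) (r G)" using va vb by auto
      moreover have "dist (b i) (a i) < \<eta>1" using dab[OF iI] \<eta> by (simp add: dist_commute)
      ultimately have "dist (\<psi> G (b i)) (\<psi> G (a i)) < s / 4" unfolding Q_def by blast
      then have "dist (u i) (w i) < s / 4" unfolding u_def w_def G_def by (simp add: dist_commute)
      then show ?thesis using ua wb va vb unfolding G_def by simp
    qed
    define ce where "ce i = cell_of s (u i)" for i
    define Bx where "Bx i = box (lo_of s (ce i)) (hi_of s (ce i))" for i
    define S where "S i = \<phi> (Gi i) ` Bx i" for i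
    define key where "key i = (Gi i, {j\<in>Basis. odd (ce i j)})" for i
    have F3: "u i \<in> Bx i" "w i \<in> Bx i" if "i \<in> I" for i
      using cell_in_box[OF s(1) conjunct2[OF conjunct2[OF conjunct2[OF conjunct2[OF F1[OF that]]]]]]
      unfolding Bx_def ce_def by auto
    have F4: "closure (Bx i) \<subseteq> cball (c (Gi i)) (2 * r (Gi i))" if iI: "i \<in> I" for i
    proof
      fix v assume v: "v \<in> closure (Bx i)"
      have ne: "box (lo_of s (ce i)) (hi_of s (ce i)) \<noteq> {}" using F3[OF iI] unfolding Bx_def by blast
      have vc: "v \<in> cbox (lo_of s (ce i)) (hi_of s (ce i))" using v ne unfolding Bx_def by simp
      have uc: "u i \<in> cbox (lo_of s (ce i)) (hi_of s (ce i))" using F3[OF iI] box_subset_cbox unfolding Bx_def by blast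
      have "dist (u i) v \<le> 3 / 2 * s * DIM('b)" by (rule cellbox_diam[OF s(1) uc vc])
      then have "dist (u i) v < \<sigma>" using s n_def by simp
      moreover have "\<sigma> \<le> r (Gi i)" using \<sigma>(2) Gi[OF iI] unfolding P_def by blast
      moreover have "dist (c (Gi i)) (u i) < r (Gi i)" using F1[OF iI] by simp
      ultimately show "v \<in> cball (c (Gi i)) (2 * r (Gi i))" using dist_triangle[of "c (Gi i)" v "u i"] by simp
    qed
    have chG: "homeomorphism (V (Gi i)) (U (Gi i)) (\<phi> (Gi i)) (\<psi> (Gi i)) \<and> openin (top_of_set X) (U (Gi i))
       \<and> cball (c (Gi i)) (2 * r (Gi i)) \<subseteq> V (Gi i)" if "i \<in> I" for i
      using ch Gi that by blast
    have stage: "\<And>i Fx. i \<in> I \<Longrightarrow> finite Fx \<Longrightarrow> Fx \<subseteq> X \<Longrightarrow> a i \<notin> Fx \<Longrightarrow> b i \<notin> Fx \<Longrightarrow>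
      \<exists>\<Phi> \<Phi>'. homeomorphism X X \<Phi> \<Phi>' \<and> \<Phi> (a i) = b i \<and> (\<forall>z\<in>Fx. \<Phi> z = z)
         \<and> (\<forall>z\<in>X - S i. \<Phi> z = z) \<and> (\<forall>z\<in>X \<inter> S i. \<Phi> z \<in> S i)"
    proof -
      fix i Fx assume iI: "i \<in> I" and finF: "finite Fx" and "Fx \<subseteq> X" and aF: "a i \<notin> Fx" and bF: "b i \<notin> Fx"
      have clB: "closure (Bx i) \<subseteq> V (Gi i)" using F4[OF iI] chG[OF iI] by blast
      have cB: "connected (Bx i)" unfolding Bx_def by (simp add: convex_connected)
      have e1: "\<phi> (Gi i) (u i) = a i" "\<phi> (Gi i) (w i) = b i" using F1[OF iI] by auto
      show "\<exists>\<Phi> \<Phi>'. homeomorphism X X \<Phi> \<Phi>' \<and> \<Phi> (a i) = b i \<and> (\<forall>z\<in>Fx. \<Phi> z = z)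
         \<and> (\<forall>z\<in>X - S i. \<Phi> z = z) \<and> (\<forall>z\<in>X \<inter> S i. \<Phi> z \<in> S i)"
        using chart_stage[of "V (Gi i)" "U (Gi i)" "\<phi> (Gi i)" "\<psi> (Gi i)" X "Bx i" "u i" "w i" Fx]
          chG[OF iI] cB clB dim F3[OF iI] finF aF bF e1 unfolding S_def Bx_def by auto
    qed
    have diam: "\<And>i z1 z2. i \<in> I \<Longrightarrow> z1 \<in> X \<inter> S i \<Longrightarrow> z2 \<in> X \<inter> S i \<Longrightarrow> dist z1 z2 \<le> D"
    proof -
      fix i z1 z2 assume iI: "i \<in> I" and z1: "z1 \<in> X \<inter> S i" and z2: "z2 \<in> X \<inter> S i"
      obtain v1 v2 where v: "v1 \<in> Bx i" "v2 \<in> Bx i" "z1 = \<phi> (Gi i) v1" "z2 = \<phi> (Gi i) v2"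
        using z1 z2 unfolding S_def by blast
      have vc: "v1 \<in> cbox (lo_of s (ce i)) (hi_of s (ce i))" "v2 \<in> cbox (lo_of s (ce i)) (hi_of s (ce i))"
        using v box_subset_cbox unfolding Bx_def by blast+
      have "dist v2 v1 \<le> 3 / 2 * s * DIM('b)" by (rule cellbox_diam[OF s(1) vc(2) vc(1)])
      then have "dist v2 v1 < \<sigma>" using s n_def by simp
      moreover have "v1 \<in> cball (c (Gi i)) (2 * r (Gi i))" "v2 \<in> cball (c (Gi i)) (2 * r (Gi i))"
        using F4[OF iI] v closure_subset by blast+
      moreover have "P (Gi i) \<sigma>" using \<sigma>(2) Gi[OF iI] by blast
      ultimately have "dist (\<phi> (Gi i) v2) (\<phi> (Gi i) v1) < D" unfolding P_def by blast
      then show "dist z1 z2 \<le> D" using v by (simp add: dist_commute)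
    qed
    have blk: "\<And>i j. i \<in> I \<Longrightarrow> j \<in> I \<Longrightarrow> key i = key j \<Longrightarrow> S i = S j \<or> S i \<inter> S j = {}"
    proof -
      fix i j assume iI: "i \<in> I" and jI: "j \<in> I" and kij: "key i = key j"
      then have GG: "Gi i = Gi j" and par: "{k\<in>Basis. odd (ce i k)} = {k\<in>Basis. odd (ce j k)}"
        unfolding key_def by auto
      show "S i = S j \<or> S i \<inter> S j = {}"
      proof (cases "\<forall>k\<in>Basis. ce i k = ce j k")
        case True
        then have "Bx i = Bx j" unfolding Bx_def using lo_hi_cong[of "ce i" "ce j" s] by simp
        then show ?thesis unfolding S_def GG by simp
      next
        case False
        then obtain k where k: "k \<in> Basis" "ce i k \<noteq> ce j k" by blast
        have "odd (ce i k) \<longleftrightarrow> odd (ce j k)" using par k(1) by blast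
        then have disj: "Bx i \<inter> Bx j = {}" unfolding Bx_def by (rule cellbox_disjoint[where k="ce i" and k'="ce j", OF s(1) k])
        have hom: "homeomorphism (V (Gi i)) (U (Gi i)) (\<phi> (Gi i)) (\<psi> (Gi i))" using chG[OF iI] by blast
        have inj: "inj_on (\<phi> (Gi i)) (V (Gi i))" using hom by (metis homeomorphism_apply1 inj_on_inverseI)
        have sub: "Bx i \<subseteq> V (Gi i)" "Bx j \<subseteq> V (Gi i)"
          using F4[OF iI] F4[OF jI] chG[OF iI] closure_subset GG by fastforce+
        have "S i \<inter> S j = \<phi> (Gi i) ` (Bx i \<inter> Bx j)" unfolding S_def GG[symmetric]
          using inj_on_image_Int[OF inj sub] by simp
        then show ?thesis using disj by simp
      qed
    qed
    have "key ` I \<subseteq> \<G> \<times> Pow Basis" unfolding key_def using Gi by auto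
    then have cardk: "card (key ` I) \<le> M"
    proof -
      assume "key ` I \<subseteq> \<G> \<times> Pow Basis"
      then have "card (key ` I) \<le> card (\<G> \<times> Pow (Basis :: 'b set))"
        using \<G>(2) by (intro card_mono) auto
      also have "\<dots> = M" unfolding M_def n_def by (simp add: card_cartesian_product card_Pow)
      finally show ?thesis .
    qed
    obtain ks where ks: "set ks = key ` I" "distinct ks" using finite_distinct_list[of "key ` I"] finI by auto
    obtain \<Phi> \<Phi>' where R: "homeomorphism X X \<Phi> \<Phi>'" "\<forall>i\<in>I. key i \<in> set ks \<longrightarrow> \<Phi> (a i) = b i"
      "\<forall>z\<in>X. dist (\<Phi> z) z \<le> real (length ks) * D"
    proof -
      have kc: "\<exists>\<Phi> \<Phi>'. homeomorphism X X \<Phi> \<Phi>' \<and> (\<forall>i\<in>I. key i \<in> set ks \<longrightarrow> \<Phi> (a i) = b i) \<and> (\<forall>j\<in>{}. \<Phi> (b j) = b j)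
      \<and> (\<forall>j\<in>I - {}. key j \<notin> set ks \<longrightarrow> \<Phi> (a j) = a j) \<and> (\<forall>z\<in>X. dist (\<Phi> z) z \<le> real (length ks) * D)"
        by (rule keys_compose[where I=I and X=X and a=a and b=b and S=S and key=key and D=D and ks=ks and Pre="{}",
              OF stage abX finI ainj binj ab diam blk less_imp_le[OF D(1)] ks(2)]) auto
      then show ?thesis using that by blast
    qed
    have "real (length ks) * D \<le> \<delta>0"
    proof -
      have "length ks = card (key ` I)" using ks distinct_card by metis
      then have "real (length ks) \<le> real M" using cardk by simp
      then have "real (length ks) * D \<le> real M * D" using D(1) by (simp add: mult_right_mono)
      then show ?thesis using D(2) by simp
    qed
    then have "\<forall>z\<in>X. dist (\<Phi> z) z \<le> \<delta>0" using R(3) order_trans by blast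
    moreover have "\<forall>i\<in>I. \<Phi> (a i) = b i" using R(2) ks(1) by blast
    ultimately show "\<exists>\<Phi> \<Phi>'. homeomorphism X X \<Phi> \<Phi>' \<and> (\<forall>i\<in>I. \<Phi> (a i) = b i) \<and> (\<forall>z\<in>X. dist (\<Phi> z) z \<le> \<delta>0)"
      using R(1) by blast
  qed
qed

lemma manifold_infinite:
  fixes X :: "'a::metric_space set"
  assumes man: "is_manifold_dim X TYPE('b::euclidean_space)" and aX: "a \<in> X" and r: "r > 0"
  shows "infinite (X \<inter> ball a r)"
proof
  assume fin: "finite (X \<inter> ball a r)"
  obtain U and V :: "'b set" where UV: "openin (top_of_set X) U" "a \<in> U" "open V" "V homeomorphic U"
    using man aX unfolding is_manifold_dim_def by blast
  then obtain \<phi> \<psi> where hom: "homeomorphism V U \<phi> \<psi>" unfolding homeomorphic_def by blast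
  then have hom': "homeomorphism U V \<psi> \<phi>" by (simp add: homeomorphism_symD)
  have "openin (top_of_set U) (U \<inter> ball a r)" by (simp add: openin_open_Int)
  then have "openin (top_of_set V) (\<psi> ` (U \<inter> ball a r))" by (rule homeomorphism_imp_open_map[OF hom'])
  then have op: "open (\<psi> ` (U \<inter> ball a r))" using UV(3) openin_open_trans by blast
  have "\<psi> a \<in> \<psi> ` (U \<inter> ball a r)" using UV(2) r by auto
  moreover have "U \<inter> ball a r \<subseteq> X \<inter> ball a r" using openin_subset[OF UV(1)] by auto
  then have "finite (U \<inter> ball a r)" using fin by (rule finite_subset)
  then have fin2: "finite (\<psi> ` (U \<inter> ball a r))" by simp
  ultimately have "\<psi> a \<in> interior (\<psi> ` (U \<inter> ball a r))" using op by (simp add: interior_open)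
  then have "\<psi> a islimpt (\<psi> ` (U \<inter> ball a r))" by (rule interior_limit_point)
  then show False using islimpt_finite[OF fin2] by blast
qed

lemma choose_distinct:
  assumes "finite I" "finite F" "\<And>i. i \<in> I \<Longrightarrow> infinite (P i)"
  shows "\<exists>b. inj_on b I \<and> (\<forall>i\<in>I. b i \<in> P i \<and> b i \<notin> F)"
  using assms
proof (induction I rule: finite_induct)
  case empty then show ?case by simp
next
  case (insert i I)
  then obtain b where b: "inj_on b I" "\<forall>i\<in>I. b i \<in> P i \<and> b i \<notin> F" by blast
  have "infinite (P i - (F \<union> b ` I))" using insert by (simp add: Diff_infinite_finite)
  then have "P i - (F \<union> b ` I) \<noteq> {}" by (rule infinite_imp_nonempty)
  then obtain v where v: "v \<in> P i" "v \<notin> F" "v \<notin> b ` I" by blast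
  show ?case
  proof (intro exI[of _ "b(i := v)"] conjI)
    show "inj_on (b(i := v)) (insert i I)" using b(1) v(3) insert(2) by (auto simp: inj_on_def)
    show "\<forall>j\<in>insert i I. (b(i := v)) j \<in> P j \<and> (b(i := v)) j \<notin> F" using b v insert(2) by auto
  qed
qed

lemma conj_iter:
  assumes hf: "homeomorphism X X f f'" and hg: "homeomorphism X X g g'" and clX: "closed X" and xX: "x \<in> X"
    and hC: "h ` closure (orbit X g x) \<subseteq> X"
    and conj: "\<forall>z\<in>closure (orbit X g x). f (h z) = h (g z)"
    and zC: "z \<in> closure (orbit X g x)"
  shows "iterz X f n (h z) = h (iterz X g n z)"
proof -
  have CX: "closure (orbit X g x) \<subseteq> X" by (rule closure_orbit_sub[OF hg xX clX])
  have pos: "iterz X f (int k) (h w) = h (iterz X g (int k) w)" if wC: "w \<in> closure (orbit X g x)" for k w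
  proof (induction k)
    case 0 then show ?case by simp
  next
    case (Suc k)
    have wX: "w \<in> X" "h w \<in> X" using wC CX hC by auto
    have iC: "iterz X g (int k) w \<in> closure (orbit X g x)" by (rule closure_orbit_inv[OF hg xX clX wC])
    have "iterz X f (int (Suc k)) (h w) = f (iterz X f (int k) (h w))"
      using iterz_succ[OF hf wX(2), of "int k"] by (simp add: add.commute)
    also have "\<dots> = f (h (iterz X g (int k) w))" using Suc by simp
    also have "\<dots> = h (g (iterz X g (int k) w))" using conj iC by blast
    also have "\<dots> = h (iterz X g (int (Suc k)) w)"
      using iterz_succ[OF hg wX(1), of "int k"] by (simp add: add.commute)
    finally show ?case .
  qed
  show ?thesis
  proof (cases "0 \<le> n")
    case True
    then show ?thesis using pos[OF zC, of "nat n"] by simp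
  next
    case False
    define k where "k = nat (- n)"
    have n: "n = - int k" using False by (simp add: k_def)
    have zX: "z \<in> X" using zC CX by auto
    define w where "w = iterz X g n z"
    have wC: "w \<in> closure (orbit X g x)" unfolding w_def by (rule closure_orbit_inv[OF hg xX clX zC])
    have hwX: "h w \<in> X" using wC hC by auto
    have "iterz X g (int k) w = z" unfolding w_def using iterz_add[OF hg zX, of "int k" n] n by simp
    then have "iterz X f (int k) (h w) = h z" using pos[OF wC, of k] by simp
    then have "iterz X f n (h z) = iterz X f (n + int k) (h w)" using iterz_add[OF hf hwX, of n "int k"] by simp
    also have "\<dots> = h w" using n by simp
    finally show ?thesis unfolding w_def .
  qed
qed

lemma ts_finite_shadow:
  fixes X :: "'a::metric_space set"
  assumes cX: "compact X" and man: "is_manifold_dim X TYPE('b::euclidean_space)"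
    and dim: "DIM('b) \<ge> 2" and hf: "homeomorphism X X f f'" and xX: "x \<in> X"
    and ts: "topologically_stable_point X f x" and e: "\<epsilon> > 0"
  shows "\<exists>\<delta>>0. \<forall>xs. pseudo_orbit_through X f \<delta> x xs \<longrightarrow>
           (\<forall>N::nat. \<exists>y\<in>X. \<forall>n. \<bar>n\<bar> \<le> int N \<longrightarrow> dist (iterz X f n y) (xs n) \<le> 2 * \<epsilon> / 3)"
proof -
  have clX: "closed X" using cX by (rule compact_imp_closed)
  obtain \<delta>0 where d0: "\<delta>0 > 0" and tsd: "\<And>g. is_homeo X g \<and> (\<forall>z\<in>X. dist (f z) (g z) \<le> \<delta>0) \<Longrightarrow>
        (\<exists>h. continuous_on (closure (orbit X g x)) h \<and> h ` closure (orbit X g x) \<subseteq> X \<and>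
             (\<forall>z\<in>closure (orbit X g x). f (h z) = h (g z)) \<and>
             (\<forall>z\<in>closure (orbit X g x). dist (h z) z \<le> \<epsilon> / 3))"
  proof -
    have "\<epsilon> / 3 > 0" using e by simp
    then show ?thesis using ts that unfolding topologically_stable_point_def by blast
  qed
  obtain \<eta> where eta: "\<eta> > 0" and mv: "\<And>I a b. finite (I::int set) \<and> (\<forall>i\<in>I. a i \<in> X \<and> b i \<in> X \<and> dist (a i) (b i) < \<eta>)
     \<and> inj_on a I \<and> inj_on b I \<and> (\<forall>i\<in>I. \<forall>j\<in>I. i \<noteq> j \<longrightarrow> a i \<noteq> b j) \<Longrightarrow>
     (\<exists>\<Phi> \<Phi>'. homeomorphism X X \<Phi> \<Phi>' \<and> (\<forall>i\<in>I. \<Phi> (a i) = b i) \<and> (\<forall>z\<in>X. dist (\<Phi> z) z \<le> \<delta>0 / 2))"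
    using moving_lemma[OF cX man dim, of "\<delta>0 / 2"] d0 by auto
  have "uniformly_continuous_on X f" using hf cX by (intro compact_uniformly_continuous) (auto simp: homeomorphism_def)
  then obtain \<gamma>1 where g1: "\<gamma>1 > 0" and ucf: "\<And>u v. u \<in> X \<Longrightarrow> v \<in> X \<Longrightarrow> dist v u < \<gamma>1 \<Longrightarrow> dist (f v) (f u) < \<eta> / 4"
  proof -
    have "\<eta> / 4 > 0" using eta by simp
    then show ?thesis using \<open>uniformly_continuous_on X f\<close> that unfolding uniformly_continuous_on_def by blast
  qed
  define \<gamma> where "\<gamma> = min \<gamma>1 (min (\<epsilon> / 3) (\<eta> / 4))"
  have gam: "\<gamma> > 0" "\<gamma> \<le> \<gamma>1" "\<gamma> \<le> \<epsilon> / 3" "\<gamma> \<le> \<eta> / 4" using g1 e eta by (auto simp: \<gamma>_def)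
  have fX: "\<And>z. z \<in> X \<Longrightarrow> f z \<in> X" using hf by (auto simp: homeomorphism_def)
  have finj: "\<And>u v. u \<in> X \<Longrightarrow> v \<in> X \<Longrightarrow> f u = f v \<Longrightarrow> u = v" using hf by (metis homeomorphism_apply1)
  show ?thesis
  proof (intro exI[of _ "\<eta> / 4"] conjI allI impI)
    show "\<eta> / 4 > 0" using eta by simp
    fix xs N assume po: "pseudo_orbit_through X f (\<eta> / 4) x xs"
    have xsX: "\<And>n. xs n \<in> X" and xs0: "xs 0 = x" and xsd: "\<And>n. dist (f (xs n)) (xs (n + 1)) < \<eta> / 4"
      using po unfolding pseudo_orbit_through_def by auto
    define I0 where "I0 = {- int N .. int N} - {0}"
    obtain x1 where x1: "inj_on x1 I0" "\<forall>i\<in>I0. x1 i \<in> X \<inter> ball (xs i) \<gamma> \<and> x1 i \<notin> {x}"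
      using choose_distinct[of I0 "{x}" "\<lambda>i. X \<inter> ball (xs i) \<gamma>"] manifold_infinite[OF man xsX gam(1)]
      unfolding I0_def by blast
    define xp where "xp n = (if n = 0 then x else x1 n)" for n
    define K where "K = {- int N .. int N}"
    have xpX: "xp n \<in> X" if "n \<in> K" for n using x1 that xX unfolding xp_def K_def I0_def by auto
    have xpd: "dist (xp n) (xs n) < \<gamma>" if "n \<in> K" for n
      using x1 that xs0 gam unfolding xp_def K_def I0_def by (auto simp: dist_commute)
    have xpinj: "inj_on xp K"
      using x1 unfolding inj_on_def xp_def K_def I0_def by (metis Diff_iff singletonD singletonI)
    define J where "J = {- int N ..< int N}"
    have JK: "n \<in> J \<Longrightarrow> n \<in> K" "n \<in> J \<Longrightarrow> n + 1 \<in> K" for n unfolding J_def K_def by auto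
    define p where "p n = f (xp n)" for n
    define q where "q n = xp (n + 1)" for n
    define F2 where "F2 = f ` xp ` K \<union> xp ` K"
    have finF2: "finite F2" unfolding F2_def K_def by simp
    obtain m where m: "inj_on m J" "\<forall>i\<in>J. m i \<in> X \<inter> ball (q i) (\<eta> / 4) \<and> m i \<notin> F2"
      using choose_distinct[of J F2 "\<lambda>i. X \<inter> ball (q i) (\<eta> / 4)"] finF2
        manifold_infinite[OF man, of _ "\<eta> / 4"] xpX JK eta unfolding J_def q_def
      by (metis divide_pos_pos finite_atLeastLessThan_int zero_less_numeral)
    have pX: "p n \<in> X" "q n \<in> X" if "n \<in> J" for n using xpX JK that fX unfolding p_def q_def by auto
    have pq: "dist (p n) (q n) < 3 * \<eta> / 4" if nJ: "n \<in> J" for n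
    proof -
      have "dist (p n) (q n) \<le> dist (f (xp n)) (f (xs n)) + dist (f (xs n)) (xs (n + 1)) + dist (xs (n + 1)) (xp (n + 1))"
        unfolding p_def q_def by (metis dist_triangle order_trans add_right_mono)
      moreover have "dist (f (xp n)) (f (xs n)) < \<eta> / 4"
        using ucf[of "xs n" "xp n"] xsX xpX[OF JK(1)[OF nJ]] xpd[OF JK(1)[OF nJ]] gam by simp
      moreover have "dist (xs (n + 1)) (xp (n + 1)) < \<eta> / 4"
        using xpd[OF JK(2)[OF nJ]] gam by (simp add: dist_commute)
      ultimately show ?thesis using xsd[of n] by simp
    qed
    have pinj: "inj_on p J"
    proof (rule inj_onI)
      fix u v assume "u \<in> J" "v \<in> J" "p u = p v"
      then show "u = v" using finj xpX JK xpinj unfolding p_def inj_on_def by metis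
    qed
    have qinj: "inj_on q J"
    proof (rule inj_onI)
      fix u v assume "u \<in> J" "v \<in> J" "q u = q v"
      then show "u = v" using JK xpinj unfolding q_def inj_on_def by fastforce
    qed
    have mF: "m i \<noteq> p j" "m i \<noteq> q j" if "i \<in> J" "j \<in> J" for i j
      using m(2) that JK unfolding F2_def p_def q_def by blast+
    obtain \<Phi>1 \<Phi>1' where P1: "homeomorphism X X \<Phi>1 \<Phi>1'" "\<forall>i\<in>J. \<Phi>1 (p i) = m i" "\<forall>z\<in>X. dist (\<Phi>1 z) z \<le> \<delta>0 / 2"
    proof -
      have "\<forall>i\<in>J. p i \<in> X \<and> m i \<in> X \<and> dist (p i) (m i) < \<eta>"
      proof
        fix i assume iJ: "i \<in> J"
        have "dist (p i) (m i) \<le> dist (p i) (q i) + dist (m i) (q i)" by (rule dist_triangle2)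
        also have "\<dots> < \<eta>"
        proof -
          have "dist (m i) (q i) < \<eta> / 4" using m(2) iJ by (simp add: dist_commute)
          then show ?thesis using pq[OF iJ] by linarith
        qed
        finally show "p i \<in> X \<and> m i \<in> X \<and> dist (p i) (m i) < \<eta>" using pX iJ m(2) by auto
      qed
      moreover have "\<forall>i\<in>J. \<forall>j\<in>J. i \<noteq> j \<longrightarrow> p i \<noteq> m j" using mF by metis
      moreover have "finite J" unfolding J_def by simp
      ultimately have H: "finite J \<and> (\<forall>i\<in>J. p i \<in> X \<and> m i \<in> X \<and> dist (p i) (m i) < \<eta>)
         \<and> inj_on p J \<and> inj_on m J \<and> (\<forall>i\<in>J. \<forall>j\<in>J. i \<noteq> j \<longrightarrow> p i \<noteq> m j)"
        using pinj m(1) by blast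
      show ?thesis using mv[OF H] that by blast
    qed
    obtain \<Phi>2 \<Phi>2' where P2: "homeomorphism X X \<Phi>2 \<Phi>2'" "\<forall>i\<in>J. \<Phi>2 (m i) = q i" "\<forall>z\<in>X. dist (\<Phi>2 z) z \<le> \<delta>0 / 2"
    proof -
      have "\<forall>i\<in>J. m i \<in> X \<and> q i \<in> X \<and> dist (m i) (q i) < \<eta>"
        using pX m(2) eta by (auto simp: dist_commute)
      moreover have "\<forall>i\<in>J. \<forall>j\<in>J. i \<noteq> j \<longrightarrow> m i \<noteq> q j" using mF by blast
      moreover have "finite J" unfolding J_def by simp
      ultimately have H: "finite J \<and> (\<forall>i\<in>J. m i \<in> X \<and> q i \<in> X \<and> dist (m i) (q i) < \<eta>)
         \<and> inj_on m J \<and> inj_on q J \<and> (\<forall>i\<in>J. \<forall>j\<in>J. i \<noteq> j \<longrightarrow> m i \<noteq> q j)"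
        using qinj m(1) by blast
      show ?thesis using mv[OF H] that by blast
    qed
    define g where "g = \<Phi>2 \<circ> (\<Phi>1 \<circ> f)"
    have h1: "homeomorphism X X (\<Phi>1 \<circ> f) (f' \<circ> \<Phi>1')" by (rule homeomorphism_compose[OF hf P1(1)])
    have hg: "homeomorphism X X g ((f' \<circ> \<Phi>1') \<circ> \<Phi>2')"
      unfolding g_def by (rule homeomorphism_compose[OF h1 P2(1)])
    have gX: "\<And>z. z \<in> X \<Longrightarrow> g z \<in> X" using hg by (auto simp: homeomorphism_def)
    have ginj: "\<And>u v. u \<in> X \<Longrightarrow> v \<in> X \<Longrightarrow> g u = g v \<Longrightarrow> u = v" using hg by (metis homeomorphism_apply1)
    have gclose: "dist (f z) (g z) \<le> \<delta>0" if "z \<in> X" for z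
    proof -
      have a: "f z \<in> X" "\<Phi>1 (f z) \<in> X" using fX that P1(1) by (auto simp: homeomorphism_def)
      have "dist (f z) (g z) \<le> dist (f z) (\<Phi>1 (f z)) + dist (\<Phi>1 (f z)) (\<Phi>2 (\<Phi>1 (f z)))"
        unfolding g_def o_def by (rule dist_triangle)
      also have "\<dots> \<le> \<delta>0"
      proof -
        have "dist (\<Phi>1 (f z)) (f z) \<le> \<delta>0 / 2" using P1(3) a(1) by blast
        moreover have "dist (\<Phi>2 (\<Phi>1 (f z))) (\<Phi>1 (f z)) \<le> \<delta>0 / 2" using P2(3) a(2) by blast
        ultimately show ?thesis by (simp add: dist_commute)
      qed
      finally show ?thesis .
    qed
    have gxp: "g (xp n) = xp (n + 1)" if "n \<in> J" for n
      using P1(2) P2(2) that unfolding g_def p_def q_def by simp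
    have itpos: "iterz X g (int k) x = xp (int k)" if "k \<le> N" for k
      using that
    proof (induction k)
      case 0 then show ?case by (simp add: xp_def)
    next
      case (Suc k)
      then have kJ: "int k \<in> J" unfolding J_def by simp
      have "iterz X g (int (Suc k)) x = g (iterz X g (int k) x)"
        using iterz_succ[OF hg xX, of "int k"] by (simp add: add.commute)
      also have "\<dots> = xp (int (Suc k))" using Suc gxp[OF kJ] by (simp add: add.commute)
      finally show ?case .
    qed
    have itneg: "iterz X g (- int k) x = xp (- int k)" if "k \<le> N" for k
      using that
    proof (induction k)
      case 0 then show ?case by (simp add: xp_def)
    next
      case (Suc k)
      then have kJ: "- int k - 1 \<in> J" unfolding J_def by simp
      have "g (iterz X g (- int (Suc k)) x) = iterz X g (- int k) x"
        using iterz_succ[OF hg xX, of "- int (Suc k)"] by simp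
      also have "\<dots> = g (xp (- int k - 1))" using Suc gxp[OF kJ] by simp
      also have "- int k - 1 = - int (Suc k)" by simp
      finally have "g (iterz X g (- int (Suc k)) x) = g (xp (- int (Suc k)))" .
      moreover have "xp (- int (Suc k)) \<in> X"
      proof -
        have e: "- int (Suc k) = - int k - 1" by simp
        show ?thesis unfolding e using xpX JK(1)[OF kJ] by blast
      qed
      ultimately show ?case using ginj iterz_in[OF hg xX] by blast
    qed
    have itK: "iterz X g n x = xp n" if "n \<in> K" for n
    proof (cases "0 \<le> n")
      case True
      then show ?thesis using itpos[of "nat n"] that unfolding K_def by simp
    next
      case False
      then show ?thesis using itneg[of "nat (- n)"] that unfolding K_def by simp
    qed
    have "is_homeo X g" unfolding is_homeo_def using hg by blast
    then obtain h where h: "h ` closure (orbit X g x) \<subseteq> X"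
        "\<forall>z\<in>closure (orbit X g x). f (h z) = h (g z)"
        "\<forall>z\<in>closure (orbit X g x). dist (h z) z \<le> \<epsilon> / 3"
      using tsd gclose by blast
    have x0C: "x \<in> closure (orbit X g x)" using orbit_in_closure[of X g 0 x] by simp
    show "\<exists>y\<in>X. \<forall>n. \<bar>n\<bar> \<le> int N \<longrightarrow> dist (iterz X f n y) (xs n) \<le> 2 * \<epsilon> / 3"
    proof (intro bexI[of _ "h x"] allI impI)
      show "h x \<in> X" using h(1) x0C by blast
      fix n :: int assume "\<bar>n\<bar> \<le> int N"
      then have nK: "n \<in> K" unfolding K_def by (simp add: abs_le_iff)
      have "iterz X f n (h x) = h (iterz X g n x)" by (rule conj_iter[OF hf hg clX xX h(1) h(2) x0C])
      also have "\<dots> = h (xp n)" using itK[OF nK] by simp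
      finally have e1: "iterz X f n (h x) = h (xp n)" .
      have "xp n \<in> closure (orbit X g x)" using orbit_in_closure[of X g n x] itK[OF nK] by simp
      then have "dist (h (xp n)) (xp n) \<le> \<epsilon> / 3" using h(3) by blast
      moreover have "dist (xp n) (xs n) < \<epsilon> / 3" using xpd[OF nK] gam by simp
      ultimately show "dist (iterz X f n (h x)) (xs n) \<le> 2 * \<epsilon> / 3"
        unfolding e1 using dist_triangle[of "h (xp n)" "xs n" "xp n"] by simp
    qed
  qed
qed

lemma ts_imp_shadow:
  fixes X :: "'a::metric_space set"
  assumes cX: "compact X" and man: "is_manifold_dim X TYPE('b::euclidean_space)"
    and dim: "DIM('b) \<ge> 2" and hf: "homeomorphism X X f f'" and xX: "x \<in> X"
    and ts: "topologically_stable_point X f x"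
  shows "shadowable_point X f x"
  unfolding shadowable_point_def
proof (intro allI impI)
  fix \<epsilon> :: real assume e: "\<epsilon> > 0"
  obtain \<delta> where d: "\<delta> > 0" and fs: "\<And>xs. pseudo_orbit_through X f \<delta> x xs \<Longrightarrow>
           (\<forall>N::nat. \<exists>y\<in>X. \<forall>n. \<bar>n\<bar> \<le> int N \<longrightarrow> dist (iterz X f n y) (xs n) \<le> 2 * \<epsilon> / 3)"
    using ts_finite_shadow[OF cX man dim hf xX ts e] by blast
  show "\<exists>\<delta>>0. \<forall>xs. pseudo_orbit_through X f \<delta> x xs \<longrightarrow> (\<exists>y\<in>X. \<forall>n. dist (iterz X f n y) (xs n) < \<epsilon>)"
  proof (intro exI[of _ \<delta>] conjI allI impI)
    show "\<delta> > 0" by (rule d)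
    fix xs assume "pseudo_orbit_through X f \<delta> x xs"
    then have "\<forall>N::nat. \<exists>y\<in>X. \<forall>n. \<bar>n\<bar> \<le> int N \<longrightarrow> dist (iterz X f n y) (xs n) \<le> 2 * \<epsilon> / 3" by (rule fs)
    then obtain y where y: "\<And>N. y N \<in> X" "\<And>N n. \<bar>n\<bar> \<le> int N \<Longrightarrow> dist (iterz X f n (y N)) (xs n) \<le> 2 * \<epsilon> / 3"
      by metis
    obtain l r where l: "l \<in> X" "strict_mono r" "(y \<circ> r) \<longlonglongrightarrow> l"
      using seq_compactE[OF compact_imp_seq_compact[OF cX], of y] y(1) by blast
    show "\<exists>y\<in>X. \<forall>n. dist (iterz X f n y) (xs n) < \<epsilon>"
    proof (intro bexI[of _ l] allI)
      show "l \<in> X" by (rule l(1))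
      fix n :: int
      have "(\<lambda>k. iterz X f n (y (r k))) \<longlonglongrightarrow> iterz X f n l"
        using l y(1) by (intro continuous_on_tendsto_compose[OF iterz_cont[OF hf]]) (auto simp: o_def)
      then have "(\<lambda>k. dist (iterz X f n (y (r k))) (xs n)) \<longlonglongrightarrow> dist (iterz X f n l) (xs n)"
        by (intro tendsto_dist tendsto_const)
      moreover have "\<exists>M. \<forall>k\<ge>M. dist (iterz X f n (y (r k))) (xs n) \<le> 2 * \<epsilon> / 3"
      proof (intro exI[of _ "nat \<bar>n\<bar>"] allI impI)
        fix k assume "nat \<bar>n\<bar> \<le> k"
        then have "\<bar>n\<bar> \<le> int (r k)" using seq_suble[OF l(2), of k] by linarith
        then show "dist (iterz X f n (y (r k))) (xs n) \<le> 2 * \<epsilon> / 3" by (rule y(2))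
      qed
      ultimately have "dist (iterz X f n l) (xs n) \<le> 2 * \<epsilon> / 3" by (rule LIMSEQ_le_const2)
      then show "dist (iterz X f n l) (xs n) < \<epsilon>" using e by simp
    qed
  qed
qed

theorem corollary2p8:
  fixes X :: "'a::metric_space set" and f :: "'a \<Rightarrow> 'a" and x :: 'a
  assumes "compact X"
    and "is_manifold_dim X TYPE('b::euclidean_space)"
    and "DIM('b) \<ge> 2"
    and "is_homeo X f"
    and "x \<in> X"
    and "minimally_expansive X f x"
  shows "shadowable_point X f x \<longleftrightarrow> topologically_stable_point X f x"
proof -
  obtain f' where hf: "homeomorphism X X f f'" using assms(4) unfolding is_homeo_def by blast
  show ?thesis using shadow_imp_ts[OF assms(1) hf assms(5,6)] ts_imp_shadow[OF assms(1,2,3) hf assms(5)] by blast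
qed

end
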